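(* The relations $[B_{r-1},[B_r,[F_X^+,B_{\tau(r)}]_q]_q]_q=[[B_{r-1},[B_r,F_X^+]_q]_q,B_{\tau(r)}]_q+qc_{\tau(r)}B_{r-1}L_r(K_X-K_X^{-1})$ and $[B_{\tau(r-1)},[B_{\tau(r)},[F_X^-,B_r]_q]_q]_q=[[B_{\tau(r-1)},[B_{\tau(r)},F_X^-]_q]_q,B_r]_q+qc_rB_{\tau(r-1)}L_{\tau(r)}(K_X-K_X^{-1})$ hold in $B_{\mathbf c}$.
   Context: Let $\mathbb K$ be a field of characteristic zero and $q$ an indeterminate. $n\ge1$, $I=\{1,\dots,n\}$, $\mathfrak g=\mathfrak{sl}_{n+1}(\mathbb C)$, simple roots $\alpha_i$, fundamental weights $\varpi_i$, weight lattice $P$, Cartan matrix $a_{ii}=2$, $a_{ij}=-1$ if $|i-j|=1$, else $0$, form $(\alpha_i,\alpha_j)=a_{ij}$, $(\alpha_i,\varpi_j)=\delta_{ij}$. $U_q(\mathfrak g)$ is the $\mathbb K(q^{1/2})$-algebra generated by $E_i,F_i,K_\mu$ ($\mu\in P$) with $K_0=1$, $K_\mu K_\lambda=K_{\mu+\lambda}$, $K_\mu E_i=q^{(\alpha_i,\mu)}E_iK_\mu$, $K_\mu F_i=q^{-(\alpha_i,\mu)}F_iK_\mu$, $E_iF_j-F_jE_i=\delta_{ij}\frac{K_i-K_i^{-1}}{q-q^{-1}}$ ($K_i=K_{\alpha_i}$), and the quantum Serre relations. $[a,b]_c=ab-cba$. Fix $r$ with $2\le r\le\lceil n/2\rceil-1$,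 $X=\{r+1,\dots,n-r\}$, $\tau(i)=n-i+1$ (on weights $\varpi_i\mapsto\varpi_{\tau(i)}$). $E_X^+=[E_{r+1},[\dots,[E_{n-r-1},E_{n-r}]_{q^{-1}}\dots]_{q^{-1}}]_{q^{-1}}$, $E_X^-=[E_{n-r},[\dots,[E_{r+2},E_{r+1}]_{q^{-1}}\dots]_{q^{-1}}]_{q^{-1}}$, $F_X^+=[F_{r+1},[\dots,[F_{n-r-1},F_{n-r}]_q\dots]_q]_q$, $F_X^-=[F_{n-r},[\dots,[F_{r+2},F_{r+1}]_q\dots]_q]_q$ (equal to $E_{r+1}$, $F_{r+1}$ if $|X|=1$); $K_X=K_{r+1}\cdots K_{n-r}$; $L_i=K_iK_{\tau(i)}^{-1}$. $\mathcal M_X$ is generated by $E_j,F_j,K_j^{\pm1}$ ($j\in X$); $U^0_\Theta$ by the $K_\mu$ with $-w_X\tau(\mu)=\mu$ ($w_X$ longest element of the parabolic Weyl subgroup for $X$). Parameters $c_i\in\mathbb K(q^{1/2})^\times$ ($i\in I\setminus X$) with $c_i=c_{\tau(i)}$ for $i\notin X\cup\{r,\tau(r)\}$. $B_i=F_i-c_iE_{\tau(i)}K_i^{-1}$ for $i\in I\setminus(X\cup\{r,\tau(r)\})$, $B_r=F_r-c_r[E_X^+,E_{\tau(r)}]_{q^{-1}}K_r^{-1}$, $B_{\tau(r)}=F_{\tau(r)}-c_{\tau(r)}[E_X^-,E_r]_{q^{-1}}K_{\tau(r)}^{-1}$; $B_{\mathbf c}$ is the subalgebra generated by $\mathcal M_X$,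 $U^0_\Theta$ and the $B_i$. *)

theory Defs
  imports "HOL-Library.Function_Algebras" "HOL-Computational_Algebra.Polynomial" "HOL-Computational_Algebra.Fraction_Field"
begin

text \<open>Scalars: the field K(q^(1/2)) realised as the fraction field of K[x], x = q^(1/2).\<close>
type_synonym 'k scal = "'k poly fract"

definition qhalf :: "'k::field_char_0 scal" where
  "qhalf = Fract [:0, 1:] 1"

definition qq :: "'k::field_char_0 scal" where
  "qq = qhalf ^ 2"

text \<open>Weights mu in P, in coordinates w.r.t. the fundamental weights:
  mu = sum_i mu(i) varpi_i, with support in {1..n}.\<close>
type_synonym wt = "nat \<Rightarrow> int"

definition wts :: "nat \<Rightarrow> wt set" where
  "wts n = {\<mu>. \<forall>j. j \<notin> {1..n} \<longrightarrow> \<mu> j = 0}"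

text \<open>simple root alpha_i in fundamental weight coordinates (column i of the Cartan matrix)\<close>
definition alpha :: "nat \<Rightarrow> nat \<Rightarrow> wt" where
  "alpha n i = (\<lambda>j. if j \<notin> {1..n} then 0 else if j = i then 2
                     else if j + 1 = i \<or> i + 1 = j then -1 else 0)"

definition tau :: "nat \<Rightarrow> nat \<Rightarrow> nat" where
  "tau n i = n + 1 - i"

definition qbr :: "('s \<Rightarrow> 'a::ring_1) \<Rightarrow> 's \<Rightarrow> 'a \<Rightarrow> 'a \<Rightarrow> 'a" where
  "qbr \<iota> c a b = a * b - \<iota> c * (b * a)"

text \<open>nested bracket [f x1,[f x2,[ ... ,[f x_{k-1}, f x_k]_c ...]_c]_c]_c\<close>
definition nestbr :: "('s \<Rightarrow> 'a::ring_1) \<Rightarrow> 's \<Rightarrow> (nat \<Rightarrow> 'a) \<Rightarrow> nat list \<Rightarrow> 'a" where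
  "nestbr \<iota> c f xs = foldr (\<lambda>i acc. qbr \<iota> c (f i) acc) (butlast xs) (f (last xs))"

text \<open>Defining relations of U_q(sl_{n+1}) in a K(q^(1/2))-algebra 'a, whose
  algebra structure is given by a ring homomorphism iota into the centre.\<close>
definition Uq_rels :: "nat \<Rightarrow> ('k::field_char_0 scal \<Rightarrow> 'a::ring_1) \<Rightarrow> (nat \<Rightarrow> 'a) \<Rightarrow> (nat \<Rightarrow> 'a)
                        \<Rightarrow> (wt \<Rightarrow> 'a) \<Rightarrow> bool" where
  "Uq_rels n \<iota> E F K \<longleftrightarrow>
     \<iota> 1 = 1 \<and> (\<forall>a b. \<iota> (a + b) = \<iota> a + \<iota> b) \<and> (\<forall>a b. \<iota> (a * b) = \<iota> a * \<iota> b) \<and>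
     (\<forall>s x. \<iota> s * x = x * \<iota> s) \<and>
     K 0 = 1 \<and>
     (\<forall>\<mu>\<in>wts n. \<forall>\<nu>\<in>wts n. K \<mu> * K \<nu> = K (\<mu> + \<nu>)) \<and>
     (\<forall>\<mu>\<in>wts n. \<forall>i\<in>{1..n}. K \<mu> * E i = \<iota> (qq powi (\<mu> i)) * E i * K \<mu>) \<and>
     (\<forall>\<mu>\<in>wts n. \<forall>i\<in>{1..n}. K \<mu> * F i = \<iota> (qq powi (- \<mu> i)) * F i * K \<mu>) \<and>
     (\<forall>i\<in>{1..n}. \<forall>j\<in>{1..n}. E i * F j - F j * E i =
        (if i = j then \<iota> (inverse (qq - inverse qq)) * (K (alpha n i) - K (- alpha n i)) else 0)) \<and>
     (\<forall>i\<in>{1..n}. \<forall>j\<in>{1..n}. (i + 1 = j \<or> j + 1 = i) \<longrightarrow>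
        E i * E i * E j - \<iota> (qq + inverse qq) * (E i * E j * E i) + E j * E i * E i = 0 \<and>
        F i * F i * F j - \<iota> (qq + inverse qq) * (F i * F j * F i) + F j * F i * F i = 0) \<and>
     (\<forall>i\<in>{1..n}. \<forall>j\<in>{1..n}. (i + 1 < j \<or> j + 1 < i) \<longrightarrow>
        E i * E j = E j * E i \<and> F i * F j = F j * F i)"

definition EXp :: "nat \<Rightarrow> nat \<Rightarrow> ('k::field_char_0 scal \<Rightarrow> 'a::ring_1) \<Rightarrow> (nat \<Rightarrow> 'a) \<Rightarrow> 'a" where
  "EXp n r \<iota> E = nestbr \<iota> (inverse qq) E [r+1..<n-r+1]"
definition EXm :: "nat \<Rightarrow> nat \<Rightarrow> ('k::field_char_0 scal \<Rightarrow> 'a::ring_1) \<Rightarrow> (nat \<Rightarrow> 'a) \<Rightarrow> 'a" where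
  "EXm n r \<iota> E = nestbr \<iota> (inverse qq) E (rev [r+1..<n-r+1])"
definition FXp :: "nat \<Rightarrow> nat \<Rightarrow> ('k::field_char_0 scal \<Rightarrow> 'a::ring_1) \<Rightarrow> (nat \<Rightarrow> 'a) \<Rightarrow> 'a" where
  "FXp n r \<iota> F = nestbr \<iota> qq F [r+1..<n-r+1]"
definition FXm :: "nat \<Rightarrow> nat \<Rightarrow> ('k::field_char_0 scal \<Rightarrow> 'a::ring_1) \<Rightarrow> (nat \<Rightarrow> 'a) \<Rightarrow> 'a" where
  "FXm n r \<iota> F = nestbr \<iota> qq F (rev [r+1..<n-r+1])"

text \<open>K_X = K_{r+1} ... K_{n-r} = K_{alpha_{r+1}+...+alpha_{n-r}}\<close>
definition KX :: "nat \<Rightarrow> nat \<Rightarrow> (wt \<Rightarrow> 'a) \<Rightarrow> 'a" where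
  "KX n r K = K (\<Sum>j\<in>{r+1..n-r}. alpha n j)"
definition KXinv :: "nat \<Rightarrow> nat \<Rightarrow> (wt \<Rightarrow> 'a) \<Rightarrow> 'a" where
  "KXinv n r K = K (- (\<Sum>j\<in>{r+1..n-r}. alpha n j))"

definition Lw :: "nat \<Rightarrow> (wt \<Rightarrow> 'a::ring_1) \<Rightarrow> nat \<Rightarrow> 'a" where
  "Lw n K i = K (alpha n i) * K (- alpha n (tau n i))"

definition Bgen :: "nat \<Rightarrow> nat \<Rightarrow> ('k::field_char_0 scal \<Rightarrow> 'a::ring_1) \<Rightarrow> (nat \<Rightarrow> 'a) \<Rightarrow> (nat \<Rightarrow> 'a)
                    \<Rightarrow> (wt \<Rightarrow> 'a) \<Rightarrow> (nat \<Rightarrow> 'k scal) \<Rightarrow> nat \<Rightarrow> 'a" where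
  "Bgen n r \<iota> E F K c i =
     (if i = r then F r - \<iota> (c r) * qbr \<iota> (inverse qq) (EXp n r \<iota> E) (E (tau n r)) * K (- alpha n r)
      else if i = tau n r then
        F (tau n r) - \<iota> (c (tau n r)) * qbr \<iota> (inverse qq) (EXm n r \<iota> E) (E r) * K (- alpha n (tau n r))
      else F i - \<iota> (c i) * E (tau n i) * K (- alpha n i))"

end

theory Submission
  imports Defs
begin

lemma qhalf_nz: "(qhalf :: 'k::field_char_0 scal) \<noteq> 0"
  by (simp add: qhalf_def Zero_fract_def eq_fract)
lemma qq_nz: "(qq :: 'k::field_char_0 scal) \<noteq> 0"
  by (simp add: qq_def qhalf_nz)

lemma qq_sq: "(qq :: 'k::field_char_0 scal) * qq = Fract [:0,0,0,0,1:] 1"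
  by (simp add: qq_def qhalf_def power2_eq_square)

lemma qq_sq_ne1: "(qq :: 'k::field_char_0 scal) * qq \<noteq> 1"
proof
  assume "(qq :: 'k scal) * qq = 1"
  then have "Fract [:0,0,0,0,1::'k:] 1 = Fract 1 1" by (simp add: qq_sq One_fract_def)
  then have "[:0,0,0,0,1::'k:] = 1" by (simp add: eq_fract)
  then show False by (metis coeff_pCons_0 one_poly_eq_simps(1) pCons_eq_iff zero_neq_one)
qed

lemma qq_sq_nem1: "(qq :: 'k::field_char_0 scal) * qq \<noteq> - 1"
proof
  assume "(qq :: 'k scal) * qq = - 1"
  then have "Fract [:0,0,0,0,1::'k:] 1 = Fract (-1) 1" by (simp add: qq_sq One_fract_def)
  then have "[:0,0,0,0,1::'k:] = -1" by (simp add: eq_fract)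
  then have "coeff [:0,0,0,0,1::'k:] 0 = coeff (-1) 0" by simp
  then show False by simp
qed

lemma qq_minus_inv_nz: "(qq :: 'k::field_char_0 scal) - inverse qq \<noteq> 0"
proof
  assume h: "(qq :: 'k scal) - inverse qq = 0"
  have "(qq::'k scal) * qq = qq * (qq - inverse qq) + 1" using qq_nz by (simp add: field_simps)
  then have "qq * qq = (1::'k scal)" by (simp only: h mult_zero_right add_0 diff_0)
  then show False using qq_sq_ne1 by metis
qed
lemma qq_plus_inv_nz: "(qq :: 'k::field_char_0 scal) + inverse qq \<noteq> 0"
proof
  assume h: "(qq :: 'k scal) + inverse qq = 0"
  have "(qq::'k scal) * qq = qq * (qq + inverse qq) - 1" using qq_nz by (simp add: field_simps)
  then have "qq * qq = (-1::'k scal)" by (simp only: h mult_zero_right add_0 diff_0)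
  then show False using qq_sq_nem1 by metis
qed

locale cscal =
  fixes \<iota> :: "'k::field_char_0 scal \<Rightarrow> 'a::ring_1"
  assumes i1: "\<iota> 1 = 1" and iadd: "\<And>a b. \<iota> (a+b) = \<iota> a + \<iota> b"
    and imul: "\<And>a b. \<iota> (a*b) = \<iota> a * \<iota> b" and icen: "\<And>s x. \<iota> s * x = x * \<iota> s"
begin

definition sm :: "'k scal \<Rightarrow> 'a \<Rightarrow> 'a" where "sm s x = \<iota> s * x"
definition qp :: "int \<Rightarrow> 'a \<Rightarrow> 'a" where "qp k x = \<iota> (qq powi k) * x"

lemma i0: "\<iota> 0 = 0" using iadd[of 0 0] by simp
lemma iminus: "\<iota> (- a) = - \<iota> a" using iadd[of a "-a"] by (simp add: i0 eq_neg_iff_add_eq_0 add.commute)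
lemma idiff: "\<iota> (a - b) = \<iota> a - \<iota> b" using iadd[of a "-b"] by (simp add: iminus)

lemma icen2: "x * (\<iota> s * y) = \<iota> s * (x * y)"
proof -
  have "x * (\<iota> s * y) = (x * \<iota> s) * y" by (simp add: mult.assoc)
  also have "\<dots> = (\<iota> s * x) * y" by (simp add: icen)
  finally show ?thesis by (simp add: mult.assoc)
qed

lemma qp_qp[simp]: "qp a (qp b x) = qp (a+b) x"
  by (simp add: qp_def mult.assoc[symmetric] imul[symmetric] power_int_add qq_nz)
lemma qp_0[simp]: "qp 0 x = x" by (simp add: qp_def i1)
lemma mult_qp[simp]: "x * qp k y = qp k (x*y)"
  by (simp add: qp_def icen2)
lemma qp_mult[simp]: "qp k x * y = qp k (x*y)"
  by (simp add: qp_def mult.assoc)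
lemma qp_add[simp]: "qp k (x + y) = qp k x + qp k y" by (simp add: qp_def distrib_left)
lemma qp_diff[simp]: "qp k (x - y) = qp k x - qp k y" by (simp add: qp_def right_diff_distrib)
lemma qp_minus[simp]: "qp k (- x) = - qp k x" by (simp add: qp_def)
lemma qp_zero[simp]: "qp k 0 = 0" by (simp add: qp_def)
lemma qp_inj: "qp k x = qp k y \<longleftrightarrow> x = y"
proof
  assume "qp k x = qp k y" then have "qp (-k) (qp k x) = qp (-k) (qp k y)" by simp
  then show "x = y" by simp
qed simp

lemma sm_sm[simp]: "sm s (sm t x) = sm (s*t) x"
  by (simp add: sm_def mult.assoc[symmetric] imul[symmetric])
lemma sm_1[simp]: "sm 1 x = x" by (simp add: sm_def i1)
lemma mult_sm[simp]: "x * sm s y = sm s (x*y)"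
  by (simp add: sm_def icen2)
lemma sm_mult[simp]: "sm s x * y = sm s (x*y)"
  by (simp add: sm_def mult.assoc)
lemma sm_add[simp]: "sm k (x + y) = sm k x + sm k y" by (simp add: sm_def distrib_left)
lemma sm_diff[simp]: "sm k (x - y) = sm k x - sm k y" by (simp add: sm_def right_diff_distrib)
lemma sm_minus[simp]: "sm k (- x) = - sm k x" by (simp add: sm_def)
lemma sm_zero[simp]: "sm k 0 = 0" by (simp add: sm_def)
lemma qp_sm[simp]: "qp k (sm s x) = sm s (qp k x)"
  by (simp add: sm_def qp_def mult.assoc[symmetric] imul[symmetric] mult.commute)

lemma qbr_sm: "qbr \<iota> c a b = a*b - sm c (b*a)"
  by (simp add: qbr_def sm_def)
lemma qbr_v: "qbr \<iota> (inverse qq) a b = a*b - qp (-1) (b*a)"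
  by (simp add: qbr_def qp_def power_int_minus)
lemma qbr_q: "qbr \<iota> qq a b = a*b - qp 1 (b*a)"
  by (simp add: qbr_def qp_def)

lemma reassoc:
  assumes "x*z = z*x"
  shows "qbr \<iota> c x (qbr \<iota> c y z) = qbr \<iota> c (qbr \<iota> c x y) z"
proof -
  have 1: "x*(z*w) = z*(x*w)" for w by (simp add: mult.assoc[symmetric] assms)
  show ?thesis by (simp add: qbr_sm algebra_simps assms 1)
qed

lemma comm_qbr:
  assumes "w*x = x*w" "w*y = y*w"
  shows "w * qbr \<iota> c x y = qbr \<iota> c x y * w"
proof -
  have 1: "w*(x*u) = x*(w*u)" "w*(y*u) = y*(w*u)" for u by (simp_all add: mult.assoc[symmetric] assms)
  show ?thesis by (simp add: qbr_sm algebra_simps assms 1)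
qed

lemma qcomm_qbr:
  assumes "w*x = qp a (x*w)" "w*y = qp b (y*w)"
  shows "w * qbr \<iota> c x y = qp (a+b) (qbr \<iota> c x y * w)"
proof -
  have 1: "w*(x*u) = qp a (x*(w*u))" "w*(y*u) = qp b (y*(w*u))" for u
    by (simp_all add: mult.assoc[symmetric] assms)
  show ?thesis by (simp add: qbr_sm algebra_simps assms 1 add.commute)
qed

lemma nest_single[simp]: "nestbr \<iota> c f [x] = f x" by (simp add: nestbr_def)
lemma nest_Cons: "xs \<noteq> [] \<Longrightarrow> nestbr \<iota> c f (x#xs) = qbr \<iota> c (f x) (nestbr \<iota> c f xs)"
  by (simp add: nestbr_def)

lemma nest_comm:
  "xs \<noteq> [] \<Longrightarrow> (\<forall>i\<in>set xs. y * f i = f i * y) \<Longrightarrow> y * nestbr \<iota> c f xs = nestbr \<iota> c f xs * y"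
proof (induction xs)
  case Nil then show ?case by simp
next
  case (Cons x xs)
  show ?case
  proof (cases "xs = []")
    case True then show ?thesis using Cons.prems by simp
  next
    case False
    then show ?thesis using Cons by (simp add: nest_Cons comm_qbr)
  qed
qed

lemma nest_qcomm:
  "xs \<noteq> [] \<Longrightarrow> (\<forall>i\<in>set xs. y * f i = qp (g i) (f i * y)) \<Longrightarrow>
    y * nestbr \<iota> c f xs = qp (sum_list (map g xs)) (nestbr \<iota> c f xs * y)"
proof (induction xs)
  case Nil then show ?case by simp
next
  case (Cons x xs)
  show ?case
  proof (cases "xs = []")
    case True then show ?thesis using Cons.prems by simp
  next
    case False
    then show ?thesis using Cons by (simp add: nest_Cons qcomm_qbr)
  qed
qed

lemma nest_snoc:
  "xs \<noteq> [] \<Longrightarrow> (\<forall>i\<in>set (butlast xs). f i * f t = f t * f i) \<Longrightarrow>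
    nestbr \<iota> c f (xs @ [t]) = qbr \<iota> c (nestbr \<iota> c f xs) (f t)"
proof (induction xs)
  case Nil then show ?case by simp
next
  case (Cons x xs)
  show ?case
  proof (cases "xs = []")
    case True then show ?thesis by (simp add: nest_Cons)
  next
    case False
    then have "nestbr \<iota> c f ((x # xs) @ [t]) = qbr \<iota> c (f x) (qbr \<iota> c (nestbr \<iota> c f xs) (f t))"
      using Cons by (simp add: nest_Cons)
    also have "\<dots> = qbr \<iota> c (nestbr \<iota> c f (x # xs)) (f t)"
      using Cons.prems False by (simp add: nest_Cons reassoc)
    finally show ?thesis .
  qed
qed

end

context cscal begin

lemma serre_base:
  assumes ca: "c*a = a*c"
  and Sc: "b*b*c - qp 1 (b*c*b) - qp (-1) (b*c*b) + c*b*b = 0"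
  and Sa: "b*b*a - qp 1 (b*a*b) - qp (-1) (b*a*b) + a*b*b = 0"
  shows "(b*c - qp (-1) (c*b))*(b*a - qp (-1) (a*b)) = (b*a - qp (-1) (a*b))*(b*c - qp (-1) (c*b))"
proof -
  let ?X = "(b*c - qp (-1) (c*b))*(b*a - qp (-1) (a*b)) - (b*a - qp (-1) (a*b))*(b*c - qp (-1) (c*b))"
  have ca2: "c*(a*y) = a*(c*y)" for y by (simp add: mult.assoc[symmetric] ca)
  have "qp 1 ?X + qp (-1) ?X
     = qp (-2) (a*(b*b*c - qp 1 (b*c*b) - qp (-1) (b*c*b) + c*b*b)) - (b*b*c - qp 1 (b*c*b) - qp (-1) (b*c*b) + c*b*b)*a
      - qp (-2) (c*(b*b*a - qp 1 (b*a*b) - qp (-1) (b*a*b) + a*b*b)) + (b*b*a - qp 1 (b*a*b) - qp (-1) (b*a*b) + a*b*b)*c"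
    by (simp add: algebra_simps ca ca2)
  also have "\<dots> = 0" by (simp add: Sc Sa)
  finally have "qp 1 ?X + qp (-1) ?X = 0" .
  then have "sm (qq + inverse qq) ?X = 0"
    by (simp add: sm_def qp_def iadd distrib_right power_int_minus)
  then have "sm (inverse (qq + inverse qq)) (sm (qq + inverse qq) ?X) = sm (inverse (qq + inverse qq)) 0" by (simp only:)
  moreover have e: "inverse (qq + inverse qq) * (qq + inverse qq) = (1::'k scal)" by (rule left_inverse[OF qq_plus_inv_nz])
  ultimately have "?X = 0" by (simp only: sm_sm e sm_1 sm_zero)
  then show ?thesis by simp
qed

end


locale uq =
  fixes n :: nat and \<iota> :: "'k::field_char_0 scal \<Rightarrow> 'a::ring_1"
    and E F :: "nat \<Rightarrow> 'a" and K :: "wt \<Rightarrow> 'a"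
  assumes R: "Uq_rels n \<iota> E F K"

context uq begin
lemma Rs1: "\<iota> 1 = 1"
  using R unfolding Uq_rels_def by (elim conjE) assumption
lemma Rs2: "\<forall>a b. \<iota> (a + b) = \<iota> a + \<iota> b"
  using R unfolding Uq_rels_def by (elim conjE) assumption
lemma Rs3: "\<forall>a b. \<iota> (a * b) = \<iota> a * \<iota> b"
  using R unfolding Uq_rels_def by (elim conjE) assumption
lemma Rs4: "\<forall>s x. \<iota> s * x = x * \<iota> s"
  using R unfolding Uq_rels_def by (elim conjE) assumption
lemma Rs5: "K 0 = 1"
  using R unfolding Uq_rels_def by (elim conjE) assumption
lemma Rs6: "\<forall>\<mu>\<in>wts n. \<forall>\<nu>\<in>wts n. K \<mu> * K \<nu> = K (\<mu> + \<nu>)"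
  using R unfolding Uq_rels_def by (elim conjE) assumption
lemma Rs7: "\<forall>\<mu>\<in>wts n. \<forall>i\<in>{1..n}. K \<mu> * E i = \<iota> (qq powi (\<mu> i)) * E i * K \<mu>"
  using R unfolding Uq_rels_def by (elim conjE) assumption
lemma Rs8: "\<forall>\<mu>\<in>wts n. \<forall>i\<in>{1..n}. K \<mu> * F i = \<iota> (qq powi (- \<mu> i)) * F i * K \<mu>"
  using R unfolding Uq_rels_def by (elim conjE) assumption
lemma Rs9: "\<forall>i\<in>{1..n}. \<forall>j\<in>{1..n}. E i * F j - F j * E i =
        (if i = j then \<iota> (inverse (qq - inverse qq)) * (K (alpha n i) - K (- alpha n i)) else 0)"
  using R unfolding Uq_rels_def by (elim conjE) assumption
lemma Rs10: "\<forall>i\<in>{1..n}. \<forall>j\<in>{1..n}. (i + 1 = j \<or> j + 1 = i) \<longrightarrow>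
        E i * E i * E j - \<iota> (qq + inverse qq) * (E i * E j * E i) + E j * E i * E i = 0 \<and>
        F i * F i * F j - \<iota> (qq + inverse qq) * (F i * F j * F i) + F j * F i * F i = 0"
  using R unfolding Uq_rels_def by (elim conjE) assumption
lemma Rs11: "\<forall>i\<in>{1..n}. \<forall>j\<in>{1..n}. (i + 1 < j \<or> j + 1 < i) \<longrightarrow>
        E i * E j = E j * E i \<and> F i * F j = F j * F i"
  using R unfolding Uq_rels_def by (elim conjE) assumption
end

sublocale uq \<subseteq> cscal \<iota>
  apply unfold_locales
  using uq.Rs1[OF uq_axioms] uq.Rs2[OF uq_axioms] uq.Rs3[OF uq_axioms] uq.Rs4[OF uq_axioms] by blast+

context uq begin

lemma K0: "K 0 = 1" using Rs5 by blast
lemma KK: "\<mu> \<in> wts n \<Longrightarrow> \<nu> \<in> wts n \<Longrightarrow> K \<mu> * K \<nu> = K (\<mu> + \<nu>)"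
  using Rs6 by blast
lemma KE: "\<mu> \<in> wts n \<Longrightarrow> i \<in> {1..n} \<Longrightarrow> K \<mu> * E i = qp (\<mu> i) (E i * K \<mu>)"
  using Rs7 by (simp add: qp_def mult.assoc)
lemma KF: "\<mu> \<in> wts n \<Longrightarrow> i \<in> {1..n} \<Longrightarrow> K \<mu> * F i = qp (- \<mu> i) (F i * K \<mu>)"
  using Rs8 by (simp add: qp_def mult.assoc)
lemma EF_same: "i \<in> {1..n} \<Longrightarrow>
   E i * F i - F i * E i = sm (inverse (qq - inverse qq)) (K (alpha n i) - K (- alpha n i))"
  using Rs9 by (simp add: sm_def)
lemma EF_diff: "i \<in> {1..n} \<Longrightarrow> j \<in> {1..n} \<Longrightarrow> i \<noteq> j \<Longrightarrow> E i * F j = F j * E i"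
  using Rs9 by fastforce
lemma serreE: "i \<in> {1..n} \<Longrightarrow> j \<in> {1..n} \<Longrightarrow> i + 1 = j \<or> j + 1 = i \<Longrightarrow>
   E i*E i*E j - qp 1 (E i*E j*E i) - qp (-1) (E i*E j*E i) + E j*E i*E i = 0"
proof -
  assume a: "i \<in> {1..n}" "j \<in> {1..n}" "i + 1 = j \<or> j + 1 = i"
  then have "E i * E i * E j - \<iota> (qq + inverse qq) * (E i * E j * E i) + E j * E i * E i = 0"
    using Rs10 by blast
  then show ?thesis by (simp add: qp_def iadd distrib_right power_int_minus diff_diff_eq mult.assoc)
qed
lemma farE: "i \<in> {1..n} \<Longrightarrow> j \<in> {1..n} \<Longrightarrow> i + 1 < j \<or> j + 1 < i \<Longrightarrow> E i * E j = E j * E i"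
  using Rs11 by blast
lemma farF: "i \<in> {1..n} \<Longrightarrow> j \<in> {1..n} \<Longrightarrow> i + 1 < j \<or> j + 1 < i \<Longrightarrow> F i * F j = F j * F i"
  using Rs11 by blast

definition RR :: "nat \<Rightarrow> nat \<Rightarrow> 'a" where "RR s t = nestbr \<iota> (inverse qq) E [s..<Suc t]"

lemma RR_Cons: "s < t \<Longrightarrow> RR s t = qbr \<iota> (inverse qq) (E s) (RR (Suc s) t)"
  by (simp add: RR_def upt_conv_Cons nest_Cons)

lemma RR_snoc: "1 \<le> s \<Longrightarrow> s < t \<Longrightarrow> t \<le> n \<Longrightarrow> RR s t = qbr \<iota> (inverse qq) (RR s (t - 1)) (E t)"
proof -
  assume a: "1 \<le> s" "s < t" "t \<le> n"
  have "[s..<Suc t] = [s..<Suc (t-1)] @ [t]" using a by simp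
  moreover have "\<forall>i\<in>set (butlast [s..<Suc (t-1)]). E i * E t = E t * E i"
  proof
    fix i assume "i \<in> set (butlast [s..<Suc (t-1)])"
    moreover have "[s..<Suc (t-1)] = [s..<t-1] @ [t-1]" using a by (cases t) auto
    ultimately have "i \<in> set [s..<t-1]" by (metis butlast_snoc)
    then show "E i * E t = E t * E i" using a by (intro farE) auto
  qed
  ultimately show ?thesis using a by (simp add: RR_def nest_snoc)
qed

lemma RV2_base: "1 \<le> s \<Longrightarrow> Suc s \<le> n \<Longrightarrow> E s * RR s (Suc s) = qp 1 (RR s (Suc s) * E s)"
proof -
  assume a: "1 \<le> s" "Suc s \<le> n"
  have S: "E s*E s*E (Suc s) - qp 1 (E s*E (Suc s)*E s) - qp (-1) (E s*E (Suc s)*E s) + E (Suc s)*E s*E s = 0"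
    using a by (intro serreE) auto
  have "RR s (Suc s) = E s * E (Suc s) - qp (-1) (E (Suc s) * E s)"
    by (simp add: RR_def qbr_v nest_Cons)
  moreover have "E s * (E s * E (Suc s) - qp (-1) (E (Suc s) * E s))
     - qp 1 ((E s * E (Suc s) - qp (-1) (E (Suc s) * E s)) * E s)
     = E s*E s*E (Suc s) - qp 1 (E s*E (Suc s)*E s) - qp (-1) (E s*E (Suc s)*E s) + E (Suc s)*E s*E s"
    by (simp add: algebra_simps)
  ultimately show ?thesis using S by simp
qed

end


lemma sum_app: "(sum f A) x = sum (\<lambda>a. f a x) A"
  by (induct A rule: infinite_finite_induct) (auto simp: plus_fun_def)

lemma alpha_wts[simp]: "alpha n i \<in> wts n" by (simp add: wts_def alpha_def)
lemma wts_add[simp]: "\<mu> \<in> wts n \<Longrightarrow> \<nu> \<in> wts n \<Longrightarrow> \<mu> + \<nu> \<in> wts n" by (simp add: wts_def)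
lemma wts_uminus[simp]: "\<mu> \<in> wts n \<Longrightarrow> - \<mu> \<in> wts n" by (simp add: wts_def)
lemma wts_sum[simp]: "(\<And>j. j \<in> A \<Longrightarrow> f j \<in> wts n) \<Longrightarrow> sum f A \<in> wts n"
  by (induct A rule: infinite_finite_induct) (auto simp: wts_def sum_app)
lemma wts_zero[simp]: "0 \<in> wts n" by (simp add: wts_def)

lemma alpha_at: "i \<in> {1..n} \<Longrightarrow> alpha n j i = (if i = j then 2 else if i + 1 = j \<or> j + 1 = i then -1 else 0)"
  by (simp add: alpha_def)

lemma sum_list_upt: "sum_list (map f [a..<b]) = sum f {a..<b}"
  using sum_set_upt_conv_sum_list_nat[of f a b] by simp

context cscal begin
lemma adj_aux:
  assumes Ub: "U * b = qp (-1) (b * U)"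
  shows "b * (a * U - qp (-1) (U * a)) - (a * U - qp (-1) (U * a)) * b
       = (b * a - qp (-1) (a * b)) * U - U * (b * a - qp (-1) (a * b))"
proof -
  have U2: "U * (b * y) = qp (-1) (b * (U * y))" for y using Ub by (simp add: mult.assoc[symmetric])
  show ?thesis by (simp add: algebra_simps Ub U2)
qed
end

context uq begin

lemma KKinv: "\<mu> \<in> wts n \<Longrightarrow> K \<mu> * K (- \<mu>) = 1"
  using KK[of \<mu> "-\<mu>"] K0 by simp
lemma KinvK: "\<mu> \<in> wts n \<Longrightarrow> K (- \<mu>) * K \<mu> = 1"
  using KK[of "-\<mu>" \<mu>] K0 by simp
lemma Kcomm: "\<mu> \<in> wts n \<Longrightarrow> \<nu> \<in> wts n \<Longrightarrow> K \<mu> * K \<nu> = K \<nu> * K \<mu>"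
  using KK[of \<mu> \<nu>] KK[of \<nu> \<mu>] by (simp add: add.commute)

lemma K_nestE: "\<mu> \<in> wts n \<Longrightarrow> xs \<noteq> [] \<Longrightarrow> set xs \<subseteq> {1..n} \<Longrightarrow>
   K \<mu> * nestbr \<iota> c E xs = qp (sum_list (map \<mu> xs)) (nestbr \<iota> c E xs * K \<mu>)"
  by (rule nest_qcomm) (auto intro!: KE)
lemma K_nestF: "\<mu> \<in> wts n \<Longrightarrow> xs \<noteq> [] \<Longrightarrow> set xs \<subseteq> {1..n} \<Longrightarrow>
   K \<mu> * nestbr \<iota> c F xs = qp (sum_list (map (\<lambda>i. - \<mu> i) xs)) (nestbr \<iota> c F xs * K \<mu>)"
  by (rule nest_qcomm) (auto intro!: KF)

lemma RR_single[simp]: "RR s s = E s" by (simp add: RR_def)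

lemma RR_two: "RR s (Suc s) = qbr \<iota> (inverse qq) (E s) (E (Suc s))"
  by (simp add: RR_def nest_Cons)

lemma RR_comm:
  assumes "\<forall>i\<in>{s..t}. y * E i = E i * y" "s \<le> t"
  shows "y * RR s t = RR s t * y"
  unfolding RR_def using assms by (intro nest_comm) auto

lemma RV2: "1 \<le> s \<Longrightarrow> s < t \<Longrightarrow> t \<le> n \<Longrightarrow> E s * RR s t = qp 1 (RR s t * E s)"
proof -
  assume a: "1 \<le> s" "s < t" "t \<le> n"
  show ?thesis
  proof (cases "t = Suc s")
    case True then show ?thesis using a RV2_base by simp
  next
    case False
    then have t2: "Suc (Suc s) \<le> t" using a by simp
    have "RR s t = qbr \<iota> (inverse qq) (E s) (qbr \<iota> (inverse qq) (E (Suc s)) (RR (Suc (Suc s)) t))"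
      using t2 by (simp add: RR_Cons)
    also have "\<dots> = qbr \<iota> (inverse qq) (RR s (Suc s)) (RR (Suc (Suc s)) t)"
      unfolding RR_two using a t2 by (intro reassoc RR_comm) (auto intro!: farE)
    finally have eq: "RR s t = qbr \<iota> (inverse qq) (RR s (Suc s)) (RR (Suc (Suc s)) t)" .
    have c1: "E s * RR s (Suc s) = qp 1 (RR s (Suc s) * E s)" using a t2 RV2_base by simp
    have c2: "E s * RR (Suc (Suc s)) t = qp 0 (RR (Suc (Suc s)) t * E s)"
      using a t2 by (simp, intro RR_comm) (auto intro!: farE)
    show ?thesis unfolding eq using qcomm_qbr[OF c1 c2] by simp
  qed
qed

lemma RV1_adj: "1 \<le> s \<Longrightarrow> Suc (Suc s) \<le> t \<Longrightarrow> t \<le> n \<Longrightarrow> E (Suc s) * RR s t = RR s t * E (Suc s)"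
proof (induction t rule: nat_less_induct)
  case (1 t)
  show ?case
  proof (cases "t = Suc (Suc s)")
    case True
    let ?a = "E s" and ?b = "E (Suc s)" and ?c = "E (Suc (Suc s))"
    let ?U = "?b * ?c - qp (-1) (?c * ?b)" and ?W = "?b * ?a - qp (-1) (?a * ?b)"
    have ca: "?c * ?a = ?a * ?c" using 1 True by (intro farE) auto
    have Sc: "?b*?b*?c - qp 1 (?b*?c*?b) - qp (-1) (?b*?c*?b) + ?c*?b*?b = 0"
      using 1 True by (intro serreE) auto
    have Sa: "?b*?b*?a - qp 1 (?b*?a*?b) - qp (-1) (?b*?a*?b) + ?a*?b*?b = 0"
      using 1 True by (intro serreE) auto
    have UW: "?U * ?W = ?W * ?U" using serre_base[OF ca Sc Sa] .
    have bU: "?b * ?U = qp 1 (?U * ?b)"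
      using RV2_base[of "Suc s"] 1 True by (simp add: RR_two qbr_v)
    have Ub: "?U * ?b = qp (-1) (?b * ?U)" using bU by simp
    have RRe: "RR s t = ?a * ?U - qp (-1) (?U * ?a)"
      using True by (simp add: RR_Cons RR_two qbr_v)
    have "?b * (?a * ?U - qp (-1) (?U * ?a)) - (?a * ?U - qp (-1) (?U * ?a)) * ?b = ?W * ?U - ?U * ?W"
      by (rule adj_aux[OF Ub])
    then show ?thesis unfolding RRe using UW by simp
  next
    case False
    then have t3: "Suc (Suc (Suc s)) \<le> t" using 1 by simp
    have IH: "E (Suc s) * RR s (t - 1) = RR s (t - 1) * E (Suc s)"
      using 1 t3 by (intro 1(1)[rule_format]) auto
    have c2: "E (Suc s) * E t = E t * E (Suc s)" using 1 t3 by (intro farE) auto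
    show ?thesis using 1 t3 RR_snoc[of s t] comm_qbr[OF IH c2] by simp
  qed
qed

lemma RV1: "1 \<le> s \<Longrightarrow> s < j \<Longrightarrow> j < t \<Longrightarrow> t \<le> n \<Longrightarrow> E j * RR s t = RR s t * E j"
proof (induction "j - s" arbitrary: s rule: nat_less_induct)
  case 1
  show ?case
  proof (cases "j = Suc s")
    case True then show ?thesis using 1 RV1_adj by simp
  next
    case False
    have IH: "E j * RR (Suc s) t = RR (Suc s) t * E j"
      using 1 False by (intro 1(1)[rule_format]) auto
    have c1: "E j * E s = E s * E j" using 1 False by (intro farE) auto
    show ?thesis using 1 RR_Cons[of s t] comm_qbr[OF c1 IH] by simp
  qed
qed

end

lemma sum_alpha: "1 \<le> a \<Longrightarrow> b \<le> Suc n \<Longrightarrow> (\<Sum>i\<in>{a..<b}. alpha n j i) =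
   (if a \<le> j \<and> j < b then 2 else 0) - (if a \<le> Suc j \<and> Suc j < b then 1 else 0)
   - (if Suc a \<le> j \<and> j \<le> b then 1 else 0)"
proof (induction b)
  case 0 then show ?case by simp
next
  case (Suc b)
  show ?case
  proof (cases "b < a")
    case True then show ?thesis by auto
  next
    case False
    then have "{a..<Suc b} = insert b {a..<b}" by auto
    then have "(\<Sum>i\<in>{a..<Suc b}. alpha n j i) = alpha n j b + (\<Sum>i\<in>{a..<b}. alpha n j i)" by simp
    then show ?thesis using Suc False by (simp add: alpha_def)
  qed
qed

lemma sum_list_map_neg: "sum_list (map (\<lambda>i. - f i) xs) = - sum_list (map f xs :: int list)"
  by (induct xs) auto
lemma sum_list_map_rev: "sum_list (map f (rev xs)) = sum_list (map f xs :: int list)"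
  by (induct xs) (auto simp: add.commute)
lemma sum_list_map_neg2: "sum_list (map (- f) xs) = - sum_list (map f xs :: int list)"
  by (induct xs) auto

lemma alpha_sym: "i \<in> {1..n} \<Longrightarrow> j \<in> {1..n} \<Longrightarrow> alpha n j i = alpha n i j"
  by (auto simp: alpha_def)

context cscal begin

lemma qp_sm_conv: "qp k X = sm (qq powi k) X" by (simp add: qp_def sm_def)
lemma sm_plus: "sm s X + sm t X = sm (s+t) X" by (simp add: sm_def iadd distrib_right)
lemma sm_minus': "sm s X - sm t X = sm (s-t) X" by (simp add: sm_def idiff left_diff_distrib)
lemma sm_cong: "s = t \<Longrightarrow> sm s X = sm t X" by simp

abbreviation kap :: "'k scal" where "kap \<equiv> inverse (qq - inverse qq)"

lemma kapd: "kap * (qq - inverse qq) = 1"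
  by (rule left_inverse[OF qq_minus_inv_nz])

lemma kap1: "sm (kap*kap) (qp 1 X) = sm kap X + sm (kap*kap) (qp (-1) X)"
proof -
  have "sm kap X + sm (kap*kap) (qp (-1) X) = sm (kap + kap*kap*inverse qq) X"
    by (simp add: qp_sm_conv sm_plus power_int_minus)
  also have "kap + kap*kap*inverse qq = kap*kap*qq"
  proof -
    have "kap*kap*qq - kap*kap*inverse qq = kap * (kap * (qq - inverse qq))" by (simp add: algebra_simps)
    also have "\<dots> = kap" by (simp only: kapd mult_1_right)
    finally show ?thesis by (simp add: algebra_simps)
  qed
  finally show ?thesis by (simp add: qp_sm_conv)
qed

lemma kap_a: "sm kap (X - qp (-2) X) = qp (-1) X"
proof -
  have "sm kap (X - qp (-2) X) = sm (kap - kap * inverse (qq^2)) X"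
    by (simp add: qp_sm_conv sm_minus' power_int_minus)
  also have "kap - kap * inverse (qq^2) = inverse qq"
  proof -
    have "kap - kap * inverse (qq^2) = kap * (qq - inverse qq) * inverse qq"
    proof -
      have nz: "(qq::'k scal) \<noteq> 0" by (rule qq_nz)
      then show ?thesis by (simp add: algebra_simps power2_eq_square right_inverse)
    qed
    also have "\<dots> = inverse qq" by (simp only: kapd mult_1_left)
    finally show ?thesis .
  qed
  finally show ?thesis by (simp add: qp_sm_conv power_int_minus)
qed

lemma kap_b: "sm kap (qp (-1) X - qp 1 X) = - X"
proof -
  have "sm kap (qp (-1) X - qp 1 X) = sm (- (kap * (qq - inverse qq))) X"
    by (simp add: qp_sm_conv sm_minus' power_int_minus algebra_simps)
  also have "\<dots> = - X" by (simp only: kapd) (simp add: sm_def iminus i1)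
  finally show ?thesis .
qed

lemma FE_step:
  fixes A B C D KA KAi Kt Kti :: 'a and k :: "'k scal"
  assumes AC: "A*C = C*A" and BD: "B*D = D*B"
    and AD: "A*D = D*A - sm k (KA - KAi)" and BC: "B*C = C*B - sm k (Kt - Kti)"
    and KAB: "KA*B = qp 1 (B*KA)" and KAiB: "KAi*B = qp (-1) (B*KAi)"
    and KAC: "KA*C = qp (-1) (C*KA)" and KAiC: "KAi*C = qp 1 (C*KAi)"
    and KtA: "Kt*A = qp 1 (A*Kt)" and KtiA: "Kti*A = qp (-1) (A*Kti)"
    and KtD: "Kt*D = qp (-1) (D*Kt)" and KtiD: "Kti*D = qp 1 (D*Kti)"
    and KtKA: "Kt*KA = KA*Kt" and KtiKA: "Kti*KA = KA*Kti"
    and kk: "\<And>X. sm (k*k) (qp 1 X) = sm k X + sm (k*k) (qp (-1) X)"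
  shows "(A*B - qp 1 (B*A)) * (C*D - qp (-1) (D*C)) - (C*D - qp (-1) (D*C)) * (A*B - qp 1 (B*A))
       = - sm k (KA*Kt - KAi*Kti)"
proof -
  have r: "A*(C*y) = C*(A*y)" "B*(D*y) = D*(B*y)"
    "A*(D*y) = D*(A*y) - sm k (KA*y - KAi*y)" "B*(C*y) = C*(B*y) - sm k (Kt*y - Kti*y)"
    "KA*(B*y) = qp 1 (B*(KA*y))" "KAi*(B*y) = qp (-1) (B*(KAi*y))"
    "KA*(C*y) = qp (-1) (C*(KA*y))" "KAi*(C*y) = qp 1 (C*(KAi*y))"
    "Kt*(A*y) = qp 1 (A*(Kt*y))" "Kti*(A*y) = qp (-1) (A*(Kti*y))"
    "Kt*(D*y) = qp (-1) (D*(Kt*y))" "Kti*(D*y) = qp 1 (D*(Kti*y))" for y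
    using assms by (simp_all add: mult.assoc[symmetric] left_diff_distrib)
  show ?thesis
    by (simp add: algebra_simps AC BD AD BC KAB KAiB KAC KAiC KtA KtiA KtD KtiD r KtKA KtiKA kk)
qed

end

context uq begin

definition FF :: "nat \<Rightarrow> nat \<Rightarrow> 'a" where "FF s t = nestbr \<iota> qq F [s..<Suc t]"
definition EL :: "nat \<Rightarrow> nat \<Rightarrow> 'a" where "EL s t = nestbr \<iota> (inverse qq) E (rev [s..<Suc t])"
definition KS :: "nat \<Rightarrow> nat \<Rightarrow> wt" where "KS s t = (\<Sum>j\<in>{s..t}. alpha n j)"

lemma KS_wts[simp]: "KS s t \<in> wts n" by (simp add: KS_def)

lemma KS_at: "1 \<le> s \<Longrightarrow> t \<le> n \<Longrightarrow> i \<in> {1..n} \<Longrightarrow> KS s t i =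
   (if s \<le> i \<and> i < Suc t then 2 else 0) - (if s \<le> Suc i \<and> Suc i < Suc t then 1 else 0)
   - (if Suc s \<le> i \<and> i \<le> Suc t then 1 else 0)"
proof -
  assume a: "1 \<le> s" "t \<le> n" "i \<in> {1..n}"
  have "KS s t i = (\<Sum>j\<in>{s..<Suc t}. alpha n i j)"
    unfolding KS_def sum_app using a atLeastLessThanSuc_atLeastAtMost
    by (intro sum.cong) (auto intro: alpha_sym)
  also have "\<dots> = (if s \<le> i \<and> i < Suc t then 2 else 0) - (if s \<le> Suc i \<and> Suc i < Suc t then 1 else 0)
   - (if Suc s \<le> i \<and> i \<le> Suc t then 1 else 0)" using a by (intro sum_alpha) auto
  finally show ?thesis .
qed

lemma FE: assumes s1: "1 \<le> s" and st0: "s \<le> t" shows "t \<le> n \<Longrightarrow>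
  FF s t * EL s t - EL s t * FF s t = - sm kap (K (KS s t) - K (- KS s t))"
  using st0
proof (induction t rule: dec_induct)
  case base
  have "E s * F s - F s * E s = sm kap (K (alpha n s) - K (- alpha n s))"
    using base s1 by (intro EF_same) auto
  moreover have "KS s s = alpha n s" by (simp add: KS_def)
  moreover have "FF s s = F s" "EL s s = E s" by (simp_all add: FF_def EL_def)
  ultimately show ?case by (metis minus_diff_eq)
next
  case (step t)
  let ?A = "FF s t" and ?B = "F (Suc t)" and ?C = "E (Suc t)" and ?D = "EL s t"
  let ?KA = "K (KS s t)" and ?KAi = "K (- KS s t)" and ?Kt = "K (alpha n (Suc t))" and ?Kti = "K (- alpha n (Suc t))"
  have st: "1 \<le> s" "s \<le> t" "Suc t \<le> n" using step s1 by auto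
  have IH: "?A * ?D - ?D * ?A = - sm kap (?KA - ?KAi)" by (rule step.IH) (use st in linarith)
  have eqA: "FF s (Suc t) = ?A * ?B - qp 1 (?B * ?A)"
  proof -
    have l: "[s..<Suc (Suc t)] = [s..<Suc t] @ [Suc t]" using st by simp
    have "\<forall>i\<in>set (butlast [s..<Suc t]). F i * F (Suc t) = F (Suc t) * F i"
    proof
      fix i assume "i \<in> set (butlast [s..<Suc t])"
      then have "i \<in> set [s..<t]" using st by simp
      then show "F i * F (Suc t) = F (Suc t) * F i" using st by (intro farF) auto
    qed
    then have "nestbr \<iota> qq F ([s..<Suc t] @ [Suc t]) = qbr \<iota> qq (nestbr \<iota> qq F [s..<Suc t]) (F (Suc t))"
      using st by (intro nest_snoc) auto
    then show ?thesis unfolding FF_def l by (simp only: qbr_q)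
  qed
  have eqD: "EL s (Suc t) = ?C * ?D - qp (-1) (?D * ?C)"
    unfolding EL_def using st by (simp add: nest_Cons qbr_v)
  have AC: "?A * ?C = ?C * ?A"
  proof -
    have "?C * ?A = ?A * ?C" unfolding FF_def using st by (intro nest_comm) (auto intro!: EF_diff)
    then show ?thesis by simp
  qed
  have BD: "?B * ?D = ?D * ?B"
  proof -
    have "?B * ?D = ?D * ?B" unfolding EL_def using st
      by (intro nest_comm) (auto intro!: EF_diff[symmetric])
    then show ?thesis by simp
  qed
  have AD: "?A * ?D = ?D * ?A - sm kap (?KA - ?KAi)" using IH by (simp add: algebra_simps)
  have BC: "?B * ?C = ?C * ?B - sm kap (?Kt - ?Kti)"
    using EF_same[of "Suc t"] st by (simp add: algebra_simps)
  have KSt: "KS s t (Suc t) = -1" using KS_at[of s t "Suc t"] st by simp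
  have KAB: "?KA * ?B = qp 1 (?B * ?KA)" using KF[of "KS s t" "Suc t"] st KSt by simp
  have KAiB: "?KAi * ?B = qp (-1) (?B * ?KAi)" using KF[of "- KS s t" "Suc t"] st KSt by simp
  have KAC: "?KA * ?C = qp (-1) (?C * ?KA)" using KE[of "KS s t" "Suc t"] st KSt by simp
  have KAiC: "?KAi * ?C = qp 1 (?C * ?KAi)" using KE[of "- KS s t" "Suc t"] st KSt by simp
  have sa: "(\<Sum>i\<in>{s..<Suc t}. alpha n (Suc t) i) = -1" using st by (subst sum_alpha) auto
  have sl: "set [s..<Suc t] \<subseteq> {1..n}" "[s..<Suc t] \<noteq> []" using st by auto
  have sa': "sum_list (map (alpha n (Suc t)) [s..<Suc t]) = -1" using sa by (simp only: sum_list_upt)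
  have sl2: "set (rev [s..<Suc t]) \<subseteq> {1..n}" "rev [s..<Suc t] \<noteq> []" using sl by auto
  have KtA: "?Kt * ?A = qp 1 (?A * ?Kt)"
    using K_nestF[of "alpha n (Suc t)" "[s..<Suc t]" qq] sl unfolding FF_def
    by (simp only: sum_list_map_neg sa' alpha_wts) simp
  have KtiA: "?Kti * ?A = qp (-1) (?A * ?Kti)"
    using K_nestF[of "- alpha n (Suc t)" "[s..<Suc t]" qq] sl unfolding FF_def
    by (simp only: uminus_apply minus_minus sa' alpha_wts wts_uminus) simp
  have KtD: "?Kt * ?D = qp (-1) (?D * ?Kt)"
    using K_nestE[of "alpha n (Suc t)" "rev [s..<Suc t]" "inverse qq"] sl2 unfolding EL_def
    by (simp only: sum_list_map_rev sa' alpha_wts) simp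
  have KtiD: "?Kti * ?D = qp 1 (?D * ?Kti)"
    using K_nestE[of "- alpha n (Suc t)" "rev [s..<Suc t]" "inverse qq"] sl2 unfolding EL_def
    by (simp only: sum_list_map_rev sum_list_map_neg2 sa' alpha_wts wts_uminus) simp
  have KtKA: "?Kt * ?KA = ?KA * ?Kt" by (simp add: Kcomm)
  have KtiKA: "?Kti * ?KA = ?KA * ?Kti" by (simp add: Kcomm)
  have main: "(?A * ?B - qp 1 (?B * ?A)) * (?C * ?D - qp (-1) (?D * ?C)) - (?C * ?D - qp (-1) (?D * ?C)) * (?A * ?B - qp 1 (?B * ?A))
       = - sm kap (?KA * ?Kt - ?KAi * ?Kti)"
    by (rule FE_step[OF AC BD AD BC KAB KAiB KAC KAiC KtA KtiA KtD KtiD KtKA KtiKA kap1])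
  have KSs: "KS s (Suc t) = KS s t + alpha n (Suc t)" using st by (simp add: KS_def)
  have k1: "?KA * ?Kt = K (KS s (Suc t))" by (simp only: KSs KK KS_wts alpha_wts)
  have k2: "?KAi * ?Kti = K (- KS s (Suc t))" by (simp only: KSs KK KS_wts alpha_wts wts_uminus minus_add_distrib)
  show ?case using main unfolding eqA[symmetric] eqD[symmetric] k1 k2 .
qed

end

context cscal begin

lemma PM_aux:
  assumes Pe: "P*e = qp (-1) (e*P)" and eR: "e*Rf = Rf*e" and Rf: "Rf = Er*P - qp (-1) (P*Er)"
  shows "P*(e*Er - qp (-1) (Er*e)) = (e*Er - qp (-1) (Er*e))*P"
proof -
  have eP: "e*P = qp 1 (P*e)" using Pe by simp
  have eP2: "e*(P*y) = qp 1 (P*(e*y))" for y using eP by (simp add: mult.assoc[symmetric])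
  have eR': "e*(Er*P) = Er*(P*e) - qp (-1) (P*(Er*e)) + qp (-1) (e*(P*Er))"
    using eR unfolding Rf by (simp add: algebra_simps)
  show ?thesis by (simp add: algebra_simps eP eP2 eR')
qed

lemma comm4:
  assumes "x1*y1 = y1*x1" "x1*y2 = y2*x1" "x2*y1 = y1*x2" "x2*y2 = y2*x2"
  shows "(x1 - sm s x2)*(y1 - sm t y2) = (y1 - sm t y2)*(x1 - sm s x2)"
  using assms by (simp add: algebra_simps)

lemma main_ring:
  assumes ad: "a*d = d*a"
  shows "qbr \<iota> qq a (qbr \<iota> qq b (qbr \<iota> qq f d)) =
    qbr \<iota> qq (qbr \<iota> qq a (qbr \<iota> qq b f)) d + qp 1 (qbr \<iota> qq a (f*(b*d - d*b) - (b*d - d*b)*f))"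
proof -
  have ad2: "a*(d*y) = d*(a*y)" for y by (simp add: mult.assoc[symmetric] ad)
  show ?thesis by (simp add: qbr_q algebra_simps ad ad2)
qed

lemma bd_aux:
  "(x1 - sm s x2)*(y1 - sm t y2) - (y1 - sm t y2)*(x1 - sm s x2) =
   (x1*y1 - y1*x1) - sm t (x1*y2 - y2*x1) - sm s (x2*y1 - y1*x2) + sm (s*t) (x2*y2 - y2*x2)"
  by (simp add: algebra_simps)

lemma FrM_aux:
  assumes Fe: "Fr*e = e*Fr" and EF: "Er*Fr - Fr*Er = sm kap (Kr - Kri)"
    and Ke: "Kr*e = qp (-1) (e*Kr)" and Kie: "Kri*e = qp 1 (e*Kri)"
  shows "Fr*(e*Er - qp (-1) (Er*e)) - (e*Er - qp (-1) (Er*e))*Fr = - qp (-1) (e*Kr)"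
proof -
  have Fe2: "Fr*(e*y) = e*(Fr*y)" for y by (simp add: mult.assoc[symmetric] Fe)
  have "Fr*(e*Er - qp (-1) (Er*e)) - (e*Er - qp (-1) (Er*e))*Fr
      = - (e*(Er*Fr - Fr*Er) - qp (-1) ((Er*Fr - Fr*Er)*e))"
    by (simp add: algebra_simps Fe Fe2)
  also have "\<dots> = - sm kap (e*Kr - qp (-2) (e*Kr))"
    unfolding EF by (simp add: algebra_simps Ke Kie)
  also have "\<dots> = - qp (-1) (e*Kr)" by (simp only: kap_a)
  finally show ?thesis .
qed

lemma PF_aux:
  assumes Fe: "Ft*e = e*Ft" and EF: "Et*Ft - Ft*Et = sm kap (Kt - Kti)"
    and Ke: "Kt*e = qp (-1) (e*Kt)" and Kie: "Kti*e = qp 1 (e*Kti)"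
  shows "(e*Et - qp (-1) (Et*e))*Ft - Ft*(e*Et - qp (-1) (Et*e)) = qp (-1) (e*Kt)"
proof -
  have Fe2: "Ft*(e*y) = e*(Ft*y)" for y by (simp add: mult.assoc[symmetric] Fe)
  have "(e*Et - qp (-1) (Et*e))*Ft - Ft*(e*Et - qp (-1) (Et*e))
      = e*(Et*Ft - Ft*Et) - qp (-1) ((Et*Ft - Ft*Et)*e)"
    by (simp add: algebra_simps Fe Fe2)
  also have "\<dots> = sm kap (e*Kt - qp (-2) (e*Kt))"
    unfolding EF by (simp add: algebra_simps Ke Kie)
  also have "\<dots> = qp (-1) (e*Kt)" by (simp only: kap_a)
  finally show ?thesis .
qed

lemma f_aux:
  assumes fL: "Lr*f = f*Lr" and fL': "L'*f = f*L'"
  shows "f*(sm s (qp (-1) (e'*Lr)) - sm t (qp (-1) (e*L'))) - (sm s (qp (-1) (e'*Lr)) - sm t (qp (-1) (e*L')))*f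
    = sm s (qp (-1) ((f*e' - e'*f)*Lr)) - sm t (qp (-1) ((f*e - e*f)*L'))"
  by (simp add: algebra_simps fL fL')

lemma final_aux:
  assumes aY: "a*Y = Y*a" and aL': "a*L' = qp 1 (L'*a)" and aD: "a*D = D*a"
    and aL: "a*Lr = qp (-1) (Lr*a)" and DL: "D*Lr = Lr*D"
  shows "qp 1 (qbr \<iota> qq a (sm s (qp (-1) ((- sm kap D)*Lr)) - sm t (qp (-1) (Y*L'))))
       = qp 1 (sm s (a*Lr*D))"
proof -
  have aY2: "a*(Y*y) = Y*(a*y)" for y by (simp add: mult.assoc[symmetric] aY)
  have aD2: "a*(D*y) = D*(a*y)" for y by (simp add: mult.assoc[symmetric] aD)
  have 1: "qbr \<iota> qq a (Y*L') = 0" by (simp add: qbr_q aY2 aL' mult.assoc)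
  have 2: "qbr \<iota> qq a (D*Lr) = qp (-1) (D*Lr*a) - qp 1 (D*Lr*a)" by (simp add: qbr_q aD2 aL mult.assoc)
  have "qbr \<iota> qq a (sm s (qp (-1) ((- sm kap D)*Lr)) - sm t (qp (-1) (Y*L')))
     = - sm s (qp (-1) (sm kap (qbr \<iota> qq a (D*Lr)))) - sm t (qp (-1) (qbr \<iota> qq a (Y*L')))"
    by (simp add: qbr_q algebra_simps)
  also have "\<dots> = sm s (qp (-1) (D*Lr*a))" unfolding 1 2 kap_b by simp
  finally have L: "qp 1 (qbr \<iota> qq a (sm s (qp (-1) ((- sm kap D)*Lr)) - sm t (qp (-1) (Y*L')))) = sm s (D*Lr*a)"
    by simp
  have "a*Lr*D = qp (-1) (D*Lr*a)"
  proof -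
    have "a*Lr*D = qp (-1) (Lr*(a*D))" by (simp add: aL mult.assoc[symmetric])
    also have "\<dots> = qp (-1) (D*Lr*a)" by (simp add: aD mult.assoc[symmetric] DL)
    finally show ?thesis .
  qed
  then show ?thesis unfolding L by simp
qed

end


locale uqr = uq +
  fixes r :: nat
  assumes r2: "2 \<le> r" and rn: "r + 1 \<le> (n + 1) div 2"
begin

lemma hn: "2*r + 1 \<le> n" using rn by presburger

definition "tr = n + 1 - r"
definition "xs = [r+1..<n-r+1]"

lemma tau_r: "tau n r = tr" by (simp add: tau_def tr_def)
lemma tau_r1: "tau n (r - 1) = tr + 1" using hn r2 by (simp add: tau_def tr_def)
lemma tr_bounds: "r + 2 \<le> tr" "tr \<le> n" using hn r2 by (auto simp: tr_def)

lemma xs_RR: "xs = [r+1..<Suc (n-r)]" using hn by (simp add: xs_def)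
lemma xs_set: "set xs = {r+1..n-r}" using hn by (auto simp: xs_def)
lemma xs_ne: "xs \<noteq> []"
proof -
  have "r + 1 < n - r + 1" using hn by linarith
  then show ?thesis by (simp add: xs_def)
qed
lemma xs_sub: "set xs \<subseteq> {1..n}" using hn by (auto simp: xs_set)

lemma ee_RR: "EXp n r \<iota> E = RR (r+1) (n-r)" by (simp add: EXp_def RR_def xs_RR[unfolded xs_def])
lemma ee'_EL: "EXm n r \<iota> E = EL (r+1) (n-r)" by (simp add: EXm_def EL_def xs_RR[unfolded xs_def])
lemma ff_FF: "FXp n r \<iota> F = FF (r+1) (n-r)" by (simp add: FXp_def FF_def xs_RR[unfolded xs_def])
lemma KX_KS: "KX n r K = K (KS (r+1) (n-r))" by (simp add: KX_def KS_def)
lemma KXinv_KS: "KXinv n r K = K (- KS (r+1) (n-r))" by (simp add: KXinv_def KS_def)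

lemma EL_nest: "EL (r+1) (n-r) = nestbr \<iota> (inverse qq) E (rev xs)" by (simp add: EL_def xs_RR)
lemma FF_nest: "FF (r+1) (n-r) = nestbr \<iota> qq F xs" by (simp add: FF_def xs_RR)
lemma RR_nest: "RR (r+1) (n-r) = nestbr \<iota> (inverse qq) E xs" by (simp add: RR_def xs_RR)

definition "PP = qbr \<iota> (inverse qq) (RR (r+1) (n-r)) (E tr)"
definition "MM = qbr \<iota> (inverse qq) (EL (r+1) (n-r)) (E r)"

lemma PP_RR: "PP = RR (r+1) tr"
proof -
  have "RR (r+1) tr = qbr \<iota> (inverse qq) (RR (r+1) (tr - 1)) (E tr)"
    using tr_bounds hn by (intro RR_snoc) (auto simp: tr_def)
  moreover have "tr - 1 = n - r" using hn by (simp add: tr_def)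
  ultimately show ?thesis by (simp add: PP_def)
qed

lemma sum_delta_xs: "sum_list (map (\<lambda>j. if j = r+1 then (-1::int) else 0) (rev xs)) = -1"
proof -
  have "sum_list (map (\<lambda>j. if j = r+1 then (-1::int) else 0) (rev xs))
      = sum (\<lambda>j. if j = r+1 then (-1::int) else 0) {r+1..<n-r+1}"
    by (simp only: sum_list_map_rev xs_def sum_list_upt)
  also have "\<dots> = -1"
  proof -
    have "r + 1 \<in> {r+1..<n-r+1}" using hn by auto
    then show ?thesis by (simp add: sum.delta)
  qed
  finally show ?thesis .
qed

lemma PM: "PP * MM = MM * PP"
proof -
  have Pe: "PP * EL (r+1) (n-r) = qp (-1) (EL (r+1) (n-r) * PP)"
  proof -
    have "PP * nestbr \<iota> (inverse qq) E (rev xs)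
       = qp (sum_list (map (\<lambda>j. if j = r+1 then (-1::int) else 0) (rev xs))) (nestbr \<iota> (inverse qq) E (rev xs) * PP)"
    proof (rule nest_qcomm)
      show "rev xs \<noteq> []" using xs_ne by simp
      show "\<forall>i\<in>set (rev xs). PP * E i = qp (if i = r + 1 then - 1 else 0) (E i * PP)"
      proof
        fix i assume "i \<in> set (rev xs)"
        then have i: "r+1 \<le> i" "i \<le> n - r" by (auto simp: xs_set)
        show "PP * E i = qp (if i = r + 1 then - 1 else 0) (E i * PP)"
        proof (cases "i = r+1")
          case True
          have "E (r+1) * RR (r+1) tr = qp 1 (RR (r+1) tr * E (r+1))"
            using tr_bounds by (intro RV2) auto
          then have "qp (-1) (E (r+1) * RR (r+1) tr) = RR (r+1) tr * E (r+1)" by simp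
          then show ?thesis using True by (simp add: PP_RR)
        next
          case False
          have "E i * RR (r+1) tr = RR (r+1) tr * E i"
            using tr_bounds i False hn by (intro RV1) (auto simp: tr_def)
          then show ?thesis using False by (simp add: PP_RR)
        qed
      qed
    qed
    then show ?thesis by (simp only: sum_delta_xs EL_nest)
  qed
  have eR: "EL (r+1) (n-r) * RR r tr = RR r tr * EL (r+1) (n-r)"
  proof -
    have "RR r tr * nestbr \<iota> (inverse qq) E (rev xs) = nestbr \<iota> (inverse qq) E (rev xs) * RR r tr"
    proof (rule nest_comm)
      show "rev xs \<noteq> []" using xs_ne by simp
      show "\<forall>i\<in>set (rev xs). RR r tr * E i = E i * RR r tr"
      proof
        fix i assume "i \<in> set (rev xs)"
        then have i: "r+1 \<le> i" "i \<le> n - r" by (auto simp: xs_set)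
        have "E i * RR r tr = RR r tr * E i"
          using tr_bounds i hn r2 by (intro RV1) (auto simp: tr_def)
        then show "RR r tr * E i = E i * RR r tr" by simp
      qed
    qed
    then show ?thesis unfolding EL_nest by simp
  qed
  have Rf: "RR r tr = E r * PP - qp (-1) (PP * E r)"
    using tr_bounds by (simp add: RR_Cons PP_RR qbr_v)
  show ?thesis unfolding MM_def qbr_v by (rule PM_aux[OF Pe eR Rf])
qed

end


context cscal begin
lemma comm_sub_sm: "x1*z = z*x1 \<Longrightarrow> x2*z = z*x2 \<Longrightarrow> (x1 - sm s x2)*z = z*(x1 - sm s x2)"
  by (simp add: algebra_simps)
lemma qcomm_sub_sm: "x1*z = qp k (z*x1) \<Longrightarrow> x2*z = qp k (z*x2) \<Longrightarrow> (x1 - sm s x2)*z = qp k (z*(x1 - sm s x2))"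
  by (simp add: algebra_simps)
lemma iqq_sm: "\<iota> (qq * s) * x = qp 1 (sm s x)"
  by (simp add: qp_def sm_def imul mult.assoc)
end

lemma sum_list_zero: "(\<forall>x\<in>set xs. f x = (0::int)) \<Longrightarrow> sum_list (map f xs) = 0"
  by (induct xs) auto

context uqr begin

lemma Kxs_E: "\<mu> \<in> wts n \<Longrightarrow> K \<mu> * nestbr \<iota> c E xs = qp (\<Sum>i\<in>{r+1..<n-r+1}. \<mu> i) (nestbr \<iota> c E xs * K \<mu>)"
  using K_nestE[of \<mu> xs c] xs_ne xs_sub by (simp add: xs_def sum_list_upt)
lemma Kxs_Erev: "\<mu> \<in> wts n \<Longrightarrow> K \<mu> * nestbr \<iota> c E (rev xs) = qp (\<Sum>i\<in>{r+1..<n-r+1}. \<mu> i) (nestbr \<iota> c E (rev xs) * K \<mu>)"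
  using K_nestE[of \<mu> "rev xs" c] xs_ne xs_sub by (simp only: sum_list_map_rev xs_def sum_list_upt set_rev rev_is_Nil_conv) blast
lemma Kxs_F: "\<mu> \<in> wts n \<Longrightarrow> K \<mu> * nestbr \<iota> c F xs = qp (- (\<Sum>i\<in>{r+1..<n-r+1}. \<mu> i)) (nestbr \<iota> c F xs * K \<mu>)"
  using K_nestF[of \<mu> xs c] xs_ne xs_sub by (simp only: sum_list_map_neg xs_def sum_list_upt) blast

lemma sa_gen: "(\<Sum>i\<in>{r+1..<n-r+1}. alpha n j i) =
   (if r+1 \<le> j \<and> j < n-r+1 then 2 else 0) - (if r+1 \<le> Suc j \<and> Suc j < n-r+1 then 1 else 0)
   - (if Suc (r+1) \<le> j \<and> j \<le> n-r+1 then 1 else 0)"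
  using hn by (intro sum_alpha) auto

lemma sa_r: "(\<Sum>i\<in>{r+1..<n-r+1}. alpha n r i) = -1" unfolding sa_gen using hn by simp
lemma sa_tr: "(\<Sum>i\<in>{r+1..<n-r+1}. alpha n tr i) = -1" unfolding sa_gen using hn r2 by (simp add: tr_def; arith)
lemma sa_r1: "(\<Sum>i\<in>{r+1..<n-r+1}. alpha n (r-1) i) = 0" unfolding sa_gen using hn r2 by simp
lemma sum_neg_alpha: "(\<Sum>i\<in>A. (- alpha n j) i) = - (\<Sum>i\<in>A. alpha n j i)"
  by (simp add: sum_negf)


lemma KEv: "\<mu> \<in> wts n \<Longrightarrow> i \<in> {1..n} \<Longrightarrow> \<mu> i = k \<Longrightarrow> K \<mu> * E i = qp k (E i * K \<mu>)"
  using KE by simp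
lemma KFv: "\<mu> \<in> wts n \<Longrightarrow> i \<in> {1..n} \<Longrightarrow> \<mu> i = - k \<Longrightarrow> K \<mu> * F i = qp k (F i * K \<mu>)"
  using KF by simp

lemma ar: "alpha n r (r-1) = -1" "alpha n r r = 2" "alpha n r tr = 0" "alpha n r (tr+1) = 0"
  "alpha n tr (r-1) = 0" "alpha n tr r = 0" "alpha n tr tr = 2" "alpha n tr (tr+1) = -1"
  "alpha n (r-1) r = -1" "alpha n (r-1) tr = 0"
  using hn r2 by (simp_all add: alpha_def tr_def; arith)+

lemma idx: "r - 1 \<in> {1..n}" "r \<in> {1..n}" "tr \<in> {1..n}" "tr + 1 \<in> {1..n}"
  using hn r2 by (auto simp: tr_def)

lemma KSv: "KS (r+1) (n-r) (r-1) = 0" "KS (r+1) (n-r) (tr+1) = 0"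
proof -
  show "KS (r+1) (n-r) (r-1) = 0" using KS_at[of "r+1" "n-r" "r-1"] idx hn r2 by simp
  show "KS (r+1) (n-r) (tr+1) = 0" using KS_at[of "r+1" "n-r" "tr+1"] idx hn r2 by (simp add: tr_def; arith)
qed

lemma Bvals:
  "Bgen n r \<iota> E F K c (r - 1) = F (r-1) - sm (c (r-1)) (E (tr+1) * K (- alpha n (r-1)))"
  "Bgen n r \<iota> E F K c r = F r - sm (c r) (PP * K (- alpha n r))"
  "Bgen n r \<iota> E F K c (tau n r) = F tr - sm (c tr) (MM * K (- alpha n tr))"
proof -
  have ne: "r - 1 \<noteq> r" "r - 1 \<noteq> tau n r" "tau n r \<noteq> r" using r2 tr_bounds by (auto simp: tau_r)
  show "Bgen n r \<iota> E F K c (r - 1) = F (r-1) - sm (c (r-1)) (E (tr+1) * K (- alpha n (r-1)))"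
    using ne unfolding Bgen_def tau_r1 by (simp add: sm_def mult.assoc)
  show "Bgen n r \<iota> E F K c r = F r - sm (c r) (PP * K (- alpha n r))"
    by (simp add: Bgen_def sm_def mult.assoc PP_def ee_RR tau_r)
  show "Bgen n r \<iota> E F K c (tau n r) = F tr - sm (c tr) (MM * K (- alpha n tr))"
    using ne by (simp add: Bgen_def sm_def mult.assoc MM_def ee'_EL tau_r)
qed

end


context cscal begin
lemma qcomm_prod: "K1*z = qp a (z*K1) \<Longrightarrow> K2*z = qp b (z*K2) \<Longrightarrow> (K1*K2)*z = qp (a+b) (z*(K1*K2))"
  by (simp add: mult.assoc) (simp add: mult.assoc[symmetric] add.commute)
lemma comm_commutator: "(a::'a)*x = x*a \<Longrightarrow> a*y = y*a \<Longrightarrow> a*(x*y - y*x) = (x*y - y*x)*a"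
proof -
  assume h: "a*x = x*a" "a*y = y*a"
  have 1: "a*(x*y) = x*y*a" by (simp only: mult.assoc[symmetric] h(1)) (simp only: mult.assoc h(2))
  have 2: "a*(y*x) = y*x*a" by (simp only: mult.assoc[symmetric] h(2)) (simp only: mult.assoc h(1))
  show ?thesis by (simp add: right_diff_distrib left_diff_distrib 1 2)
qed
lemma qcomm_EK: "(x::'a)*L = qp k (L*x) \<Longrightarrow> K'*L = L*K' \<Longrightarrow> (x*K')*L = qp k (L*(x*K'))"
proof -
  assume h: "x*L = qp k (L*x)" "K'*L = L*K'"
  have "(x*K')*L = (x*L)*K'" by (simp only: mult.assoc h(2))
  also have "\<dots> = qp k (L*(x*K'))" by (simp add: h(1) mult.assoc)
  finally show ?thesis .
qed
lemma comm_diff: "(a::'a)*z1 = z1*a \<Longrightarrow> a*z2 = z2*a \<Longrightarrow> a*(z1 - z2) = (z1 - z2)*a"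
  by (simp add: right_diff_distrib left_diff_distrib)
lemma qcomm_flip: "L*z = qp a (z*L) \<Longrightarrow> z*L = qp (-a) (L*z)"
  by simp
end

lemma wts_diff[simp]: "\<mu> \<in> wts n \<Longrightarrow> \<nu> \<in> wts n \<Longrightarrow> \<mu> - \<nu> \<in> wts n" by (simp add: wts_def)

context uqr begin

definition "rm = r - 1"
lemma rm_facts: "rm \<in> {1..n}" "alpha n r rm = -1" "alpha n tr rm = 0" "alpha n rm r = -1" "alpha n rm tr = 0"
  "KS (r+1) (n-r) rm = 0" "(\<Sum>i\<in>{r+1..<n-r+1}. alpha n rm i) = 0" "rm + 2 = r + 1"
  using idx ar KSv sa_r1 r2 unfolding rm_def by auto
definition "tp = tr + 1"
lemma tp_facts: "tp \<in> {1..n}" "alpha n r tp = 0" "alpha n tr tp = -1" "KS (r+1) (n-r) tp = 0"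
  using idx ar KSv hn r2 unfolding tp_def tr_def by auto

lemma tp_val: "tp = n - r + 2" using hn unfolding tp_def tr_def by arith

lemma Bval_rm: "Bgen n r \<iota> E F K c (r - 1) = F rm - sm (c rm) (E tp * K (- alpha n rm))"
  unfolding rm_def tp_def by (rule Bvals(1))

abbreviation "EL0 \<equiv> EL (r+1) (n-r)"
abbreviation "RR0 \<equiv> RR (r+1) (n-r)"
abbreviation "FF0 \<equiv> FF (r+1) (n-r)"

lemma xs_mem: "i \<in> set xs \<Longrightarrow> r + 1 \<le> i \<and> i \<le> n - r \<and> i \<in> {1..n}"
  using xs_set xs_sub by auto

lemma comm_EL: "(\<And>i. i \<in> set xs \<Longrightarrow> y * E i = E i * y) \<Longrightarrow> y * EL0 = EL0 * y"
  unfolding EL_nest using xs_ne by (intro nest_comm) auto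
lemma comm_RR: "(\<And>i. i \<in> set xs \<Longrightarrow> y * E i = E i * y) \<Longrightarrow> y * RR0 = RR0 * y"
  unfolding RR_nest using xs_ne by (intro nest_comm) auto
lemma comm_FF: "(\<And>i. i \<in> set xs \<Longrightarrow> y * F i = F i * y) \<Longrightarrow> y * FF0 = FF0 * y"
  unfolding FF_nest using xs_ne by (intro nest_comm) auto

lemma K_EL: "\<mu> \<in> wts n \<Longrightarrow> (\<Sum>i\<in>{r+1..<n-r+1}. \<mu> i) = k \<Longrightarrow> K \<mu> * EL0 = qp k (EL0 * K \<mu>)"
  unfolding EL_nest using Kxs_Erev by simp
lemma K_RR: "\<mu> \<in> wts n \<Longrightarrow> (\<Sum>i\<in>{r+1..<n-r+1}. \<mu> i) = k \<Longrightarrow> K \<mu> * RR0 = qp k (RR0 * K \<mu>)"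
  unfolding RR_nest using Kxs_E by simp
lemma K_FF: "\<mu> \<in> wts n \<Longrightarrow> (\<Sum>i\<in>{r+1..<n-r+1}. \<mu> i) = - k \<Longrightarrow> K \<mu> * FF0 = qp k (FF0 * K \<mu>)"
  unfolding FF_nest using Kxs_F by simp

lemma ad: "(F rm - sm s (E tp * K (- alpha n rm))) * (F tr - sm t (MM * K (- alpha n tr)))
         = (F tr - sm t (MM * K (- alpha n tr))) * (F rm - sm s (E tp * K (- alpha n rm)))"
proof (rule comm4)
  show "F rm * F tr = F tr * F rm" using idx tr_bounds rm_facts by (intro farF) auto
  have f1: "F rm * EL0 = EL0 * F rm"
  proof (rule comm_EL)
    fix i assume "i \<in> set xs"
    then show "F rm * E i = E i * F rm" using EF_diff[of i "rm"] xs_mem rm_facts by fastforce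
  qed
  have f2: "F rm * E r = E r * F rm" using EF_diff[of r "rm"] idx rm_facts by fastforce
  have fM: "F rm * MM = MM * F rm" unfolding MM_def by (rule comm_qbr[OF f1 f2])
  have fK: "K (- alpha n tr) * F rm = F rm * K (- alpha n tr)"
    using KFv[of "- alpha n tr" "rm" 0] rm_facts by simp
  have "F rm * (MM * K (- alpha n tr)) = MM * (F rm * K (- alpha n tr))"
    by (simp only: mult.assoc[symmetric] fM)
  also have "\<dots> = MM * K (- alpha n tr) * F rm" by (simp add: fK mult.assoc)
  finally show "F rm * (MM * K (- alpha n tr)) = MM * K (- alpha n tr) * F rm" .
  have e3: "E tp * F tr = F tr * E tp" using EF_diff[of tp tr] idx tp_facts by (fastforce simp: tp_def)
  have k3: "K (- alpha n rm) * F tr = F tr * K (- alpha n rm)"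
    using KFv[of "- alpha n rm" tr 0] idx rm_facts by simp
  show "E tp * K (- alpha n rm) * F tr = F tr * (E tp * K (- alpha n rm))"
    by (simp only: mult.assoc k3) (simp only: mult.assoc[symmetric] e3)
  have k4: "K (- alpha n rm) * EL0 = qp 0 (EL0 * K (- alpha n rm))"
  proof (rule K_EL)
    show "(\<Sum>i\<in>{r+1..<n-r+1}. (- alpha n rm) i) = 0" unfolding sum_neg_alpha rm_facts(7) by simp
  qed simp
  have k5: "K (- alpha n rm) * E r = qp 1 (E r * K (- alpha n rm))"
    using idx rm_facts by (intro KEv) auto
  have KM: "K (- alpha n rm) * MM = qp 1 (MM * K (- alpha n rm))"
    unfolding MM_def using qcomm_qbr[OF k4 k5] by simp
  have KE2: "K (- alpha n tr) * E tp = qp 1 (E tp * K (- alpha n tr))"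
    using tp_facts by (intro KEv) auto
  have e4: "E tp * EL0 = EL0 * E tp"
  proof (rule comm_EL)
    fix i assume "i \<in> set xs"
    then have "r + 1 \<le> i \<and> i \<le> n - r \<and> i \<in> {1..n}" by (rule xs_mem)
    then show "E tp * E i = E i * E tp" using tp_facts tp_val hn by (intro farE) auto
  qed
  have e5: "E tp * E r = E r * E tp" using idx tp_facts tp_val hn by (intro farE) auto
  have EM: "E tp * MM = MM * E tp" unfolding MM_def by (rule comm_qbr[OF e4 e5])
  have KK': "K (- alpha n rm) * K (- alpha n tr) = K (- alpha n tr) * K (- alpha n rm)"
    by (simp add: Kcomm)
  have KM2: "K (- alpha n rm) * (MM * y) = qp 1 (MM * (K (- alpha n rm) * y))" for y
    by (simp add: mult.assoc[symmetric] KM)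
  have KE3: "K (- alpha n tr) * (E tp * y) = qp 1 (E tp * (K (- alpha n tr) * y))" for y
    by (simp add: mult.assoc[symmetric] KE2)
  have EM2: "E tp * (MM * y) = MM * (E tp * y)" for y
    by (simp add: mult.assoc[symmetric] EM)
  show "E tp * K (- alpha n rm) * (MM * K (- alpha n tr)) = MM * K (- alpha n tr) * (E tp * K (- alpha n rm))"
    by (simp add: mult.assoc KM2 KE3 EM2 KK')
qed

lemma sa_r_neg: "(\<Sum>i\<in>{r+1..<n-r+1}. (- alpha n r) i) = 1"
  unfolding sum_neg_alpha sa_r by simp
lemma sa_tr_neg: "(\<Sum>i\<in>{r+1..<n-r+1}. (- alpha n tr) i) = 1"
  unfolding sum_neg_alpha sa_tr by simp

lemma Lw_r: "Lw n K r = K (alpha n r) * K (- alpha n tr)" by (simp add: Lw_def tau_r)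

lemma EF_comm: "i \<in> {1..n} \<Longrightarrow> j \<in> {1..n} \<Longrightarrow> i \<noteq> j \<Longrightarrow> F j * E i = E i * F j"
  using EF_diff by simp

lemma bd: "(F r - sm u (PP * K (- alpha n r))) * (F tr - sm t (MM * K (- alpha n tr)))
   - (F tr - sm t (MM * K (- alpha n tr))) * (F r - sm u (PP * K (- alpha n r)))
   = sm t (qp (-1) (EL0 * (K (alpha n r) * K (- alpha n tr))))
     - sm u (qp (-1) (RR0 * (K (alpha n tr) * K (- alpha n r))))"
proof -
  have c1: "F r * F tr - F tr * F r = 0" using idx tr_bounds farF[of r tr] by auto
  have FrE: "F r * EL0 = EL0 * F r"
  proof (rule comm_EL)
    fix i assume "i \<in> set xs"
    then have "r + 1 \<le> i \<and> i \<le> n - r \<and> i \<in> {1..n}" by (rule xs_mem)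
    then show "F r * E i = E i * F r" using idx by (intro EF_comm) auto
  qed
  have FrM: "F r * MM - MM * F r = - qp (-1) (EL0 * K (alpha n r))"
    unfolding MM_def qbr_v
  proof (rule FrM_aux[OF FrE])
    show "E r * F r - F r * E r = sm kap (K (alpha n r) - K (- alpha n r))" using idx by (intro EF_same)
    show "K (alpha n r) * EL0 = qp (-1) (EL0 * K (alpha n r))" using sa_r by (intro K_EL) auto
    show "K (- alpha n r) * EL0 = qp 1 (EL0 * K (- alpha n r))"
      using sa_r_neg by (intro K_EL) auto
  qed
  have K2Fr: "K (- alpha n tr) * F r = F r * K (- alpha n tr)"
    using KFv[of "- alpha n tr" r 0] idx ar by simp
  have c2: "F r * (MM * K (- alpha n tr)) - MM * K (- alpha n tr) * F r = - qp (-1) (EL0 * K (alpha n r)) * K (- alpha n tr)"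
  proof -
    have "F r * (MM * K (- alpha n tr)) - MM * K (- alpha n tr) * F r = (F r * MM - MM * F r) * K (- alpha n tr)"
      by (simp add: algebra_simps K2Fr)
    then show ?thesis unfolding FrM .
  qed
  have FtR: "F tr * RR0 = RR0 * F tr"
  proof (rule comm_RR)
    fix i assume "i \<in> set xs"
    then have "r + 1 \<le> i \<and> i \<le> n - r \<and> i \<in> {1..n}" by (rule xs_mem)
    then show "F tr * E i = E i * F tr" using idx hn by (intro EF_comm) (auto simp: tr_def)
  qed
  have PF: "PP * F tr - F tr * PP = qp (-1) (RR0 * K (alpha n tr))"
    unfolding PP_def qbr_v
  proof (rule PF_aux[OF FtR])
    show "E tr * F tr - F tr * E tr = sm kap (K (alpha n tr) - K (- alpha n tr))" using idx by (intro EF_same)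
    show "K (alpha n tr) * RR0 = qp (-1) (RR0 * K (alpha n tr))" using sa_tr by (intro K_RR) auto
    show "K (- alpha n tr) * RR0 = qp 1 (RR0 * K (- alpha n tr))"
      using sa_tr_neg by (intro K_RR) auto
  qed
  have K1Ft: "K (- alpha n r) * F tr = F tr * K (- alpha n r)"
    using KFv[of "- alpha n r" tr 0] idx ar by simp
  have c3: "PP * K (- alpha n r) * F tr - F tr * (PP * K (- alpha n r)) = qp (-1) (RR0 * K (alpha n tr)) * K (- alpha n r)"
  proof -
    have "PP * K (- alpha n r) * F tr - F tr * (PP * K (- alpha n r)) = (PP * F tr - F tr * PP) * K (- alpha n r)"
      by (simp add: algebra_simps K1Ft)
    then show ?thesis unfolding PF .
  qed
  have K1M: "K (- alpha n r) * MM = qp (-1) (MM * K (- alpha n r))"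
  proof -
    have a1: "K (- alpha n r) * EL0 = qp 1 (EL0 * K (- alpha n r))"
      using sa_r_neg by (intro K_EL) auto
    have a2: "K (- alpha n r) * E r = qp (-2) (E r * K (- alpha n r))" using idx ar by (intro KEv) auto
    show ?thesis unfolding MM_def using qcomm_qbr[OF a1 a2] by simp
  qed
  have K2P: "K (- alpha n tr) * PP = qp (-1) (PP * K (- alpha n tr))"
  proof -
    have a1: "K (- alpha n tr) * RR0 = qp 1 (RR0 * K (- alpha n tr))"
      using sa_tr_neg by (intro K_RR) auto
    have a2: "K (- alpha n tr) * E tr = qp (-2) (E tr * K (- alpha n tr))" using idx ar by (intro KEv) auto
    show ?thesis unfolding PP_def using qcomm_qbr[OF a1 a2] by simp
  qed
  have KK12: "K (- alpha n r) * K (- alpha n tr) = K (- alpha n tr) * K (- alpha n r)" by (simp add: Kcomm)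
  have c4: "PP * K (- alpha n r) * (MM * K (- alpha n tr)) - MM * K (- alpha n tr) * (PP * K (- alpha n r)) = 0"
  proof -
    have "PP * K (- alpha n r) * (MM * K (- alpha n tr)) = PP * (K (- alpha n r) * MM) * K (- alpha n tr)"
      by (simp add: mult.assoc)
    also have "\<dots> = qp (-1) (PP * MM * (K (- alpha n r) * K (- alpha n tr)))" by (simp add: K1M mult.assoc)
    also have "\<dots> = qp (-1) (MM * PP * (K (- alpha n tr) * K (- alpha n r)))" by (simp add: PM KK12)
    also have "\<dots> = MM * (K (- alpha n tr) * PP) * K (- alpha n r)" by (simp add: K2P mult.assoc)
    finally show ?thesis by (simp add: mult.assoc)
  qed
  show ?thesis unfolding bd_aux c1 c2 c3 c4 by (simp add: mult.assoc)
qed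

lemma rel1:
 "qbr \<iota> qq (Bgen n r \<iota> E F K c (r - 1)) (qbr \<iota> qq (Bgen n r \<iota> E F K c r) (qbr \<iota> qq (FXp n r \<iota> F) (Bgen n r \<iota> E F K c (tau n r))))
  = qbr \<iota> qq (qbr \<iota> qq (Bgen n r \<iota> E F K c (r - 1)) (qbr \<iota> qq (Bgen n r \<iota> E F K c r) (FXp n r \<iota> F))) (Bgen n r \<iota> E F K c (tau n r))
    + \<iota> (qq * c (tau n r)) * Bgen n r \<iota> E F K c (r - 1) * Lw n K r * (KX n r K - KXinv n r K)"
proof -
  define a where "a = F rm - sm (c rm) (E tp * K (- alpha n rm))"
  define b where "b = F r - sm (c r) (PP * K (- alpha n r))"
  define d where "d = F tr - sm (c tr) (MM * K (- alpha n tr))"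
  define Lr where "Lr = K (alpha n r) * K (- alpha n tr)"
  define L' where "L' = K (alpha n tr) * K (- alpha n r)"
  define D where "D = K (KS (r+1) (n-r)) - K (- KS (r+1) (n-r))"
  have aB: "Bgen n r \<iota> E F K c (r - 1) = a" unfolding a_def by (rule Bval_rm)
  have bB: "Bgen n r \<iota> E F K c r = b" unfolding b_def by (rule Bvals(2))
  have dB: "Bgen n r \<iota> E F K c (tau n r) = d" unfolding d_def by (rule Bvals(3))
  have fB: "FXp n r \<iota> F = FF0" by (rule ff_FF)
  have LB: "Lw n K r = Lr" unfolding Lr_def by (rule Lw_r)
  have DB: "KX n r K - KXinv n r K = D" unfolding D_def KX_KS KXinv_KS ..
  have ctr: "c (tau n r) = c tr" by (simp add: tau_r)
  have ad': "a * d = d * a" unfolding a_def d_def by (rule ad)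
  have bd': "b*d - d*b = sm (c tr) (qp (-1) (EL0 * Lr)) - sm (c r) (qp (-1) (RR0 * L'))"
    unfolding b_def d_def Lr_def L'_def by (rule bd)
  have fL: "Lr * FF0 = FF0 * Lr"
  proof -
    have "K (alpha n r) * FF0 = qp 1 (FF0 * K (alpha n r))" using sa_r by (intro K_FF) auto
    moreover have "K (- alpha n tr) * FF0 = qp (-1) (FF0 * K (- alpha n tr))" using sa_tr_neg by (intro K_FF) auto
    ultimately show ?thesis unfolding Lr_def using qcomm_prod by fastforce
  qed
  have fL': "L' * FF0 = FF0 * L'"
  proof -
    have "K (alpha n tr) * FF0 = qp 1 (FF0 * K (alpha n tr))" using sa_tr by (intro K_FF) auto
    moreover have "K (- alpha n r) * FF0 = qp (-1) (FF0 * K (- alpha n r))" using sa_r_neg by (intro K_FF) auto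
    ultimately show ?thesis unfolding L'_def using qcomm_prod by fastforce
  qed
  have FE0: "FF0 * EL0 - EL0 * FF0 = - sm kap D"
    unfolding D_def using hn by (intro FE) auto
  have G: "FF0*(b*d - d*b) - (b*d - d*b)*FF0
     = sm (c tr) (qp (-1) ((- sm kap D)*Lr)) - sm (c r) (qp (-1) ((FF0*RR0 - RR0*FF0)*L'))"
    unfolding bd' f_aux[OF fL fL'] FE0 ..
  have aF: "a * F j = F j * a" if j: "j \<in> set xs" for j
  proof -
    have jj: "r + 1 \<le> j \<and> j \<le> n - r \<and> j \<in> {1..n}" using j by (rule xs_mem)
    have 1: "F rm * F j = F j * F rm" using jj rm_facts by (intro farF) auto
    have 2: "E tp * F j = F j * E tp" using jj tp_facts tp_val by (intro EF_diff) auto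
    have z: "alpha n rm j = 0" unfolding alpha_def using jj rm_facts by auto
    have 3: "K (- alpha n rm) * F j = F j * K (- alpha n rm)"
      using KFv[of "- alpha n rm" j 0] jj z by simp
    have 4: "E tp * K (- alpha n rm) * F j = F j * (E tp * K (- alpha n rm))"
      by (simp only: mult.assoc 3) (simp only: mult.assoc[symmetric] 2)
    show ?thesis unfolding a_def by (rule comm_sub_sm[OF 1 4])
  qed
  have aE: "a * E j = E j * a" if j: "j \<in> set xs" for j
  proof -
    have jj: "r + 1 \<le> j \<and> j \<le> n - r \<and> j \<in> {1..n}" using j by (rule xs_mem)
    have 1: "F rm * E j = E j * F rm" using jj rm_facts by (intro EF_comm) auto
    have 2: "E tp * E j = E j * E tp" using jj tp_facts tp_val by (intro farE) auto
    have z: "alpha n rm j = 0" unfolding alpha_def using jj rm_facts by auto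
    have 3: "K (- alpha n rm) * E j = E j * K (- alpha n rm)"
      using KEv[of "- alpha n rm" j 0] jj z by simp
    have 4: "E tp * K (- alpha n rm) * E j = E j * (E tp * K (- alpha n rm))"
      by (simp only: mult.assoc 3) (simp only: mult.assoc[symmetric] 2)
    show ?thesis unfolding a_def by (rule comm_sub_sm[OF 1 4])
  qed
  have aFF: "a * FF0 = FF0 * a" by (rule comm_FF) (rule aF)
  have aRR: "a * RR0 = RR0 * a" by (rule comm_RR) (rule aE)
  have aY: "a * (FF0*RR0 - RR0*FF0) = (FF0*RR0 - RR0*FF0) * a"
    by (rule comm_commutator[OF aFF aRR])
  have KmL: "K (- alpha n rm) * L' = L' * K (- alpha n rm)" "K (- alpha n rm) * Lr = Lr * K (- alpha n rm)"
    unfolding L'_def Lr_def by (simp_all add: KK mult.assoc[symmetric] add_ac)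
  have aL': "a * L' = qp 1 (L' * a)"
  proof -
    have "K (alpha n tr) * F rm = qp 0 (F rm * K (alpha n tr))" using rm_facts by (intro KFv) auto
    moreover have "K (- alpha n r) * F rm = qp (-1) (F rm * K (- alpha n r))" using rm_facts by (intro KFv) auto
    ultimately have "L' * F rm = qp (-1) (F rm * L')" unfolding L'_def using qcomm_prod by fastforce
    then have x1: "F rm * L' = qp 1 (L' * F rm)" by simp
    have "K (alpha n tr) * E tp = qp (-1) (E tp * K (alpha n tr))" using tp_facts by (intro KEv) auto
    moreover have "K (- alpha n r) * E tp = qp 0 (E tp * K (- alpha n r))" using tp_facts by (intro KEv) auto
    ultimately have "L' * E tp = qp (-1) (E tp * L')" unfolding L'_def using qcomm_prod by fastforce
    then have "E tp * L' = qp 1 (L' * E tp)" by simp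
    then have x2: "(E tp * K (- alpha n rm)) * L' = qp 1 (L' * (E tp * K (- alpha n rm)))"
      using KmL(1) by (rule qcomm_EK)
    show ?thesis unfolding a_def by (rule qcomm_sub_sm[OF x1 x2])
  qed
  have aD: "a * D = D * a"
  proof -
    have gen: "a * K \<mu> = K \<mu> * a" if "\<mu> \<in> wts n" "\<mu> rm = 0" "\<mu> tp = 0" for \<mu>
    proof -
      have "K \<mu> * F rm = qp 0 (F rm * K \<mu>)" using that rm_facts by (intro KFv) auto
      then have x1: "F rm * K \<mu> = K \<mu> * F rm" by simp
      have "K \<mu> * E tp = qp 0 (E tp * K \<mu>)" using that tp_facts by (intro KEv) auto
      then have "E tp * K \<mu> = qp 0 (K \<mu> * E tp)" by simp
      moreover have "K (- alpha n rm) * K \<mu> = K \<mu> * K (- alpha n rm)" using that by (simp add: Kcomm)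
      ultimately have "(E tp * K (- alpha n rm)) * K \<mu> = qp 0 (K \<mu> * (E tp * K (- alpha n rm)))"
        by (rule qcomm_EK)
      then have x2: "(E tp * K (- alpha n rm)) * K \<mu> = K \<mu> * (E tp * K (- alpha n rm))" by simp
      show ?thesis unfolding a_def by (rule comm_sub_sm[OF x1 x2])
    qed
    have "a * K (KS (r+1) (n-r)) = K (KS (r+1) (n-r)) * a" using rm_facts tp_facts by (intro gen) auto
    moreover have "a * K (- KS (r+1) (n-r)) = K (- KS (r+1) (n-r)) * a" using rm_facts tp_facts by (intro gen) auto
    ultimately show ?thesis unfolding D_def by (rule comm_diff)
  qed
  have aL: "a * Lr = qp (-1) (Lr * a)"
  proof -
    have "K (alpha n r) * F rm = qp 1 (F rm * K (alpha n r))" using rm_facts by (intro KFv) auto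
    moreover have "K (- alpha n tr) * F rm = qp 0 (F rm * K (- alpha n tr))" using rm_facts by (intro KFv) auto
    ultimately have "Lr * F rm = qp 1 (F rm * Lr)" unfolding Lr_def using qcomm_prod by fastforce
    then have x1: "F rm * Lr = qp (-1) (Lr * F rm)" by simp
    have "K (alpha n r) * E tp = qp 0 (E tp * K (alpha n r))" using tp_facts by (intro KEv) auto
    moreover have "K (- alpha n tr) * E tp = qp 1 (E tp * K (- alpha n tr))" using tp_facts by (intro KEv) auto
    ultimately have "Lr * E tp = qp 1 (E tp * Lr)" unfolding Lr_def using qcomm_prod by fastforce
    then have "E tp * Lr = qp (-1) (Lr * E tp)" by simp
    then have x2: "(E tp * K (- alpha n rm)) * Lr = qp (-1) (Lr * (E tp * K (- alpha n rm)))"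
      using KmL(2) by (rule qcomm_EK)
    show ?thesis unfolding a_def by (rule qcomm_sub_sm[OF x1 x2])
  qed
  have DL: "D * Lr = Lr * D" unfolding D_def Lr_def
    by (simp add: left_diff_distrib right_diff_distrib KK mult.assoc[symmetric] add_ac)
  have fin: "qp 1 (qbr \<iota> qq a (sm (c tr) (qp (-1) ((- sm kap D)*Lr)) - sm (c r) (qp (-1) ((FF0*RR0 - RR0*FF0)*L'))))
       = qp 1 (sm (c tr) (a*Lr*D))"
    by (rule final_aux[OF aY aL' aD aL DL])
  show ?thesis
    unfolding aB bB dB fB LB DB ctr main_ring[OF ad'] G fin
    by (simp add: iqq_sm mult.assoc)
qed

end

lemma tau_tau: "i \<in> {1..n} \<Longrightarrow> tau n (tau n i) = i" by (auto simp: tau_def)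
lemma tau_range: "i \<in> {1..n} \<Longrightarrow> tau n i \<in> {1..n}" by (auto simp: tau_def)
lemma tau_out: "i \<notin> {1..n} \<Longrightarrow> tau n i \<notin> {1..n}" by (auto simp: tau_def)
lemma comp_wts: "\<mu> \<in> wts n \<Longrightarrow> \<mu> \<circ> tau n \<in> wts n"
proof -
  assume m: "\<mu> \<in> wts n"
  have "(\<mu> \<circ> tau n) j = 0" if "j \<notin> {1..n}" for j
    using m tau_out[OF that] unfolding wts_def by simp
  then show ?thesis unfolding wts_def by blast
qed
lemma alpha_tau: "i \<in> {1..n} \<Longrightarrow> alpha n i \<circ> tau n = alpha n (tau n i)"
proof (rule ext)
  fix j assume i: "i \<in> {1..n}"
  show "(alpha n i \<circ> tau n) j = alpha n (tau n i) j"
  proof (cases "j \<in> {1..n}")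
    case True then show ?thesis using i by (auto simp: alpha_def tau_def)
  next
    case False then show ?thesis using tau_out[OF False] by (simp add: alpha_def)
  qed
qed
lemma comp_uminus: "(- \<mu>) \<circ> g = - (\<mu> \<circ> g)" by (auto simp: fun_eq_iff)
lemma comp_plus: "(\<mu> + \<nu>) \<circ> g = (\<mu> \<circ> g) + (\<nu> \<circ> g)" by (auto simp: fun_eq_iff)
lemma comp_zero: "(0::wt) \<circ> g = 0" by (auto simp: fun_eq_iff)

context uq begin

lemma tw: "Uq_rels n \<iota> (E \<circ> tau n) (F \<circ> tau n) (\<lambda>\<mu>. K (\<mu> \<circ> tau n))"
  unfolding Uq_rels_def
proof (intro conjI)
  show "\<iota> 1 = 1" by (rule Rs1)
  show "\<forall>a b. \<iota> (a + b) = \<iota> a + \<iota> b" by (rule Rs2)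
  show "\<forall>a b. \<iota> (a * b) = \<iota> a * \<iota> b" by (rule Rs3)
  show "\<forall>s x. \<iota> s * x = x * \<iota> s" by (rule Rs4)
  show "K (0 \<circ> tau n) = 1" by (simp add: comp_zero K0)
  show "\<forall>\<mu>\<in>wts n. \<forall>\<nu>\<in>wts n. K (\<mu> \<circ> tau n) * K (\<nu> \<circ> tau n) = K ((\<mu> + \<nu>) \<circ> tau n)"
    by (simp add: KK comp_wts comp_plus)
  show "\<forall>\<mu>\<in>wts n. \<forall>i\<in>{1..n}. K (\<mu> \<circ> tau n) * (E \<circ> tau n) i = \<iota> (qq powi \<mu> i) * (E \<circ> tau n) i * K (\<mu> \<circ> tau n)"
  proof (intro ballI)
    fix \<mu> i assume m: "\<mu> \<in> wts n" and i: "i \<in> {1..n}"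
    have "K (\<mu> \<circ> tau n) * E (tau n i) = \<iota> (qq powi ((\<mu> \<circ> tau n) (tau n i))) * E (tau n i) * K (\<mu> \<circ> tau n)"
      using Rs7 comp_wts[OF m] tau_range[OF i] by blast
    then show "K (\<mu> \<circ> tau n) * (E \<circ> tau n) i = \<iota> (qq powi \<mu> i) * (E \<circ> tau n) i * K (\<mu> \<circ> tau n)"
      using tau_tau[OF i] by simp
  qed
  show "\<forall>\<mu>\<in>wts n. \<forall>i\<in>{1..n}. K (\<mu> \<circ> tau n) * (F \<circ> tau n) i = \<iota> (qq powi - \<mu> i) * (F \<circ> tau n) i * K (\<mu> \<circ> tau n)"
  proof (intro ballI)
    fix \<mu> i assume m: "\<mu> \<in> wts n" and i: "i \<in> {1..n}"
    have "K (\<mu> \<circ> tau n) * F (tau n i) = \<iota> (qq powi (- (\<mu> \<circ> tau n) (tau n i))) * F (tau n i) * K (\<mu> \<circ> tau n)"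
      using Rs8 comp_wts[OF m] tau_range[OF i] by blast
    then show "K (\<mu> \<circ> tau n) * (F \<circ> tau n) i = \<iota> (qq powi - \<mu> i) * (F \<circ> tau n) i * K (\<mu> \<circ> tau n)"
      using tau_tau[OF i] by simp
  qed
  show "\<forall>i\<in>{1..n}. \<forall>j\<in>{1..n}. (E \<circ> tau n) i * (F \<circ> tau n) j - (F \<circ> tau n) j * (E \<circ> tau n) i =
        (if i = j then \<iota> (inverse (qq - inverse qq)) * (K (alpha n i \<circ> tau n) - K (- alpha n i \<circ> tau n)) else 0)"
  proof (intro ballI)
    fix i j assume ij: "i \<in> {1..n}" "j \<in> {1..n}"
    have e: "tau n i = tau n j \<longleftrightarrow> i = j" using ij by (metis tau_tau)
    show "(E \<circ> tau n) i * (F \<circ> tau n) j - (F \<circ> tau n) j * (E \<circ> tau n) i =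
        (if i = j then \<iota> (inverse (qq - inverse qq)) * (K (alpha n i \<circ> tau n) - K (- alpha n i \<circ> tau n)) else 0)"
      using Rs9 tau_range[OF ij(1)] tau_range[OF ij(2)] e ij
      by (simp add: comp_uminus alpha_tau)
  qed
  show "\<forall>i\<in>{1..n}. \<forall>j\<in>{1..n}. i + 1 = j \<or> j + 1 = i \<longrightarrow>
        (E \<circ> tau n) i * (E \<circ> tau n) i * (E \<circ> tau n) j - \<iota> (qq + inverse qq) * ((E \<circ> tau n) i * (E \<circ> tau n) j * (E \<circ> tau n) i) + (E \<circ> tau n) j * (E \<circ> tau n) i * (E \<circ> tau n) i = 0 \<and>
        (F \<circ> tau n) i * (F \<circ> tau n) i * (F \<circ> tau n) j - \<iota> (qq + inverse qq) * ((F \<circ> tau n) i * (F \<circ> tau n) j * (F \<circ> tau n) i) + (F \<circ> tau n) j * (F \<circ> tau n) i * (F \<circ> tau n) i = 0"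
  proof (intro ballI impI)
    fix i j assume ij: "i \<in> {1..n}" "j \<in> {1..n}" and a: "i + 1 = j \<or> j + 1 = i"
    have adj: "tau n i + 1 = tau n j \<or> tau n j + 1 = tau n i" using ij a by (auto simp: tau_def)
    show "(E \<circ> tau n) i * (E \<circ> tau n) i * (E \<circ> tau n) j - \<iota> (qq + inverse qq) * ((E \<circ> tau n) i * (E \<circ> tau n) j * (E \<circ> tau n) i) + (E \<circ> tau n) j * (E \<circ> tau n) i * (E \<circ> tau n) i = 0 \<and>
        (F \<circ> tau n) i * (F \<circ> tau n) i * (F \<circ> tau n) j - \<iota> (qq + inverse qq) * ((F \<circ> tau n) i * (F \<circ> tau n) j * (F \<circ> tau n) i) + (F \<circ> tau n) j * (F \<circ> tau n) i * (F \<circ> tau n) i = 0"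
      using Rs10[rule_format, OF tau_range[OF ij(1)] tau_range[OF ij(2)] adj] by simp
  qed
  show "\<forall>i\<in>{1..n}. \<forall>j\<in>{1..n}. i + 1 < j \<or> j + 1 < i \<longrightarrow>
        (E \<circ> tau n) i * (E \<circ> tau n) j = (E \<circ> tau n) j * (E \<circ> tau n) i \<and> (F \<circ> tau n) i * (F \<circ> tau n) j = (F \<circ> tau n) j * (F \<circ> tau n) i"
  proof (intro ballI impI)
    fix i j assume ij: "i \<in> {1..n}" "j \<in> {1..n}" and a: "i + 1 < j \<or> j + 1 < i"
    have adj: "tau n i + 1 < tau n j \<or> tau n j + 1 < tau n i" using ij a by (auto simp: tau_def)
    show "(E \<circ> tau n) i * (E \<circ> tau n) j = (E \<circ> tau n) j * (E \<circ> tau n) i \<and> (F \<circ> tau n) i * (F \<circ> tau n) j = (F \<circ> tau n) j * (F \<circ> tau n) i"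
      using Rs11[rule_format, OF tau_range[OF ij(1)] tau_range[OF ij(2)] adj] by simp
  qed
qed

end

lemma nest_map: "xs \<noteq> [] \<Longrightarrow> nestbr \<iota> c (f \<circ> g) xs = nestbr \<iota> c f (map g xs)"
  by (simp add: nestbr_def map_butlast[symmetric] last_map foldr_map o_def)

context uqr begin

lemma uq_tw: "uq n \<iota> (E \<circ> tau n) (F \<circ> tau n) (\<lambda>\<mu>. K (\<mu> \<circ> tau n))"
  unfolding uq_def by (rule tw)
lemma uqr_tw: "uqr n \<iota> (E \<circ> tau n) (F \<circ> tau n) (\<lambda>\<mu>. K (\<mu> \<circ> tau n)) r"
  unfolding uqr_def uqr_axioms_def using uq_tw r2 rn by blast

lemma map_tau_xs: "map (tau n) [r+1..<n-r+1] = rev [r+1..<n-r+1]"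
proof (rule nth_equalityI)
  show "length (map (tau n) [r+1..<n-r+1]) = length (rev [r+1..<n-r+1])" by simp
  fix k assume "k < length (map (tau n) [r+1..<n-r+1])"
  then have k: "k < n - r + 1 - (r + 1)" by (simp del: upt_Suc)
  then show "map (tau n) [r+1..<n-r+1] ! k = rev [r+1..<n-r+1] ! k"
    using hn by (simp add: rev_nth tau_def del: upt_Suc)
qed

lemma xs_ne': "[r+1..<n-r+1] \<noteq> []" using xs_ne by (simp add: xs_def)

lemma EXp_tw: "EXp n r \<iota> (E \<circ> tau n) = EXm n r \<iota> E"
  unfolding EXp_def EXm_def by (simp only: nest_map[OF xs_ne'] map_tau_xs)
lemma EXm_tw: "EXm n r \<iota> (E \<circ> tau n) = EXp n r \<iota> E"
proof -
  have ne: "rev [r+1..<n-r+1] \<noteq> []" using xs_ne' by simp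
  show ?thesis unfolding EXp_def EXm_def by (simp only: nest_map[OF ne] rev_map[symmetric] map_tau_xs rev_rev_ident)
qed
lemma FXp_tw: "FXp n r \<iota> (F \<circ> tau n) = FXm n r \<iota> F"
  unfolding FXp_def FXm_def by (simp only: nest_map[OF xs_ne'] map_tau_xs)

lemma tau_X: "tau n ` {r+1..n-r} = {r+1..n-r}"
proof
  show "tau n ` {r+1..n-r} \<subseteq> {r+1..n-r}" using hn by (auto simp: tau_def)
  show "{r+1..n-r} \<subseteq> tau n ` {r+1..n-r}"
  proof
    fix x assume x: "x \<in> {r+1..n-r}"
    then have "x = tau n (tau n x)" "tau n x \<in> {r+1..n-r}" using hn by (auto simp: tau_def)
    then show "x \<in> tau n ` {r+1..n-r}" by blast
  qed
qed

lemma sumX_tw: "(\<Sum>j\<in>{r+1..n-r}. alpha n j) \<circ> tau n = (\<Sum>j\<in>{r+1..n-r}. alpha n j)"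
proof -
  have "(\<Sum>j\<in>{r+1..n-r}. alpha n j) \<circ> tau n = (\<Sum>j\<in>{r+1..n-r}. alpha n j \<circ> tau n)"
    by (simp add: fun_eq_iff sum_app)
  also have "\<dots> = (\<Sum>j\<in>{r+1..n-r}. alpha n (tau n j))"
    using hn by (intro sum.cong) (auto simp: alpha_tau)
  also have "\<dots> = (\<Sum>j\<in>tau n ` {r+1..n-r}. alpha n j)"
  proof -
    have "inj_on (tau n) {r+1..n-r}" using hn by (auto simp: inj_on_def tau_def)
    then show ?thesis by (simp add: sum.reindex)
  qed
  finally show ?thesis unfolding tau_X .
qed

lemma KX_tw: "KX n r (\<lambda>\<mu>. K (\<mu> \<circ> tau n)) = KX n r K"
  unfolding KX_def by (simp only: sumX_tw)
lemma KXinv_tw: "KXinv n r (\<lambda>\<mu>. K (\<mu> \<circ> tau n)) = KXinv n r K"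
  unfolding KXinv_def by (simp only: comp_uminus sumX_tw)

lemma Lw_tw: "Lw n (\<lambda>\<mu>. K (\<mu> \<circ> tau n)) r = Lw n K (tau n r)"
  unfolding Lw_def using idx tau_range tau_tau by (simp add: comp_uminus alpha_tau tau_r)

lemma B_tw:
  "Bgen n r \<iota> (E \<circ> tau n) (F \<circ> tau n) (\<lambda>\<mu>. K (\<mu> \<circ> tau n)) (c \<circ> tau n) (r - 1) = Bgen n r \<iota> E F K c (tau n (r - 1))"
  "Bgen n r \<iota> (E \<circ> tau n) (F \<circ> tau n) (\<lambda>\<mu>. K (\<mu> \<circ> tau n)) (c \<circ> tau n) r = Bgen n r \<iota> E F K c (tau n r)"
  "Bgen n r \<iota> (E \<circ> tau n) (F \<circ> tau n) (\<lambda>\<mu>. K (\<mu> \<circ> tau n)) (c \<circ> tau n) (tau n r) = Bgen n r \<iota> E F K c r"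
proof -
  have i: "r - 1 \<in> {1..n}" "r \<in> {1..n}" "tau n r \<in> {1..n}" "tau n (r - 1) \<in> {1..n}"
    using idx tau_r tau_r1 by auto
  have ne: "r - 1 \<noteq> r" "r - 1 \<noteq> tau n r" "tau n r \<noteq> r" "tau n (r - 1) \<noteq> r" "tau n (r - 1) \<noteq> tau n r"
    using r2 tr_bounds tau_r tau_r1 by auto
  have tt: "tau n (tau n r) = r" "tau n (tau n (r - 1)) = r - 1" using i tau_tau by auto
  show "Bgen n r \<iota> (E \<circ> tau n) (F \<circ> tau n) (\<lambda>\<mu>. K (\<mu> \<circ> tau n)) (c \<circ> tau n) (r - 1) = Bgen n r \<iota> E F K c (tau n (r - 1))"
    unfolding Bgen_def using ne tt i by (simp add: comp_uminus alpha_tau)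
  show "Bgen n r \<iota> (E \<circ> tau n) (F \<circ> tau n) (\<lambda>\<mu>. K (\<mu> \<circ> tau n)) (c \<circ> tau n) r = Bgen n r \<iota> E F K c (tau n r)"
    unfolding Bgen_def using ne tt i by (simp add: comp_uminus alpha_tau EXp_tw)
  show "Bgen n r \<iota> (E \<circ> tau n) (F \<circ> tau n) (\<lambda>\<mu>. K (\<mu> \<circ> tau n)) (c \<circ> tau n) (tau n r) = Bgen n r \<iota> E F K c r"
    unfolding Bgen_def using ne tt i by (simp add: comp_uminus alpha_tau EXm_tw)
qed

lemma rel2:
 "qbr \<iota> qq (Bgen n r \<iota> E F K c (tau n (r - 1)))
      (qbr \<iota> qq (Bgen n r \<iota> E F K c (tau n r)) (qbr \<iota> qq (FXm n r \<iota> F) (Bgen n r \<iota> E F K c r)))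
    = qbr \<iota> qq (qbr \<iota> qq (Bgen n r \<iota> E F K c (tau n (r - 1))) (qbr \<iota> qq (Bgen n r \<iota> E F K c (tau n r)) (FXm n r \<iota> F)))
        (Bgen n r \<iota> E F K c r)
      + \<iota> (qq * c r) * Bgen n r \<iota> E F K c (tau n (r - 1)) * Lw n K (tau n r) * (KX n r K - KXinv n r K)"
proof -
  interpret T: uqr n \<iota> "E \<circ> tau n" "F \<circ> tau n" "\<lambda>\<mu>. K (\<mu> \<circ> tau n)" r by (rule uqr_tw)
  have "(c \<circ> tau n) (tau n r) = c r" using tau_tau[OF idx(2)] by simp
  then show ?thesis
    using T.rel1[of "c \<circ> tau n"] unfolding B_tw FXp_tw KX_tw KXinv_tw Lw_tw by simp
qed

end

theorem lemmaA2:
  fixes n r :: nat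
    and \<iota> :: "'k::field_char_0 scal \<Rightarrow> 'a::ring_1"
    and E F :: "nat \<Rightarrow> 'a" and K :: "wt \<Rightarrow> 'a"
    and c :: "nat \<Rightarrow> 'k scal"
  assumes n: "n \<ge> 1"
    and r: "2 \<le> r" "r + 1 \<le> (n + 1) div 2"
    and rels: "Uq_rels n \<iota> E F K"
    and c_nz: "\<forall>i\<in>{1..n} - {r+1..n-r}. c i \<noteq> 0"
    and c_sym: "\<forall>i\<in>{1..n} - ({r+1..n-r} \<union> {r, tau n r}). c i = c (tau n i)"
  shows
   "qbr \<iota> qq (Bgen n r \<iota> E F K c (r - 1))
      (qbr \<iota> qq (Bgen n r \<iota> E F K c r) (qbr \<iota> qq (FXp n r \<iota> F) (Bgen n r \<iota> E F K c (tau n r))))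
    = qbr \<iota> qq (qbr \<iota> qq (Bgen n r \<iota> E F K c (r - 1)) (qbr \<iota> qq (Bgen n r \<iota> E F K c r) (FXp n r \<iota> F)))
        (Bgen n r \<iota> E F K c (tau n r))
      + \<iota> (qq * c (tau n r)) * Bgen n r \<iota> E F K c (r - 1) * Lw n K r * (KX n r K - KXinv n r K)
   \<and>
    qbr \<iota> qq (Bgen n r \<iota> E F K c (tau n (r - 1)))
      (qbr \<iota> qq (Bgen n r \<iota> E F K c (tau n r)) (qbr \<iota> qq (FXm n r \<iota> F) (Bgen n r \<iota> E F K c r)))
    = qbr \<iota> qq (qbr \<iota> qq (Bgen n r \<iota> E F K c (tau n (r - 1))) (qbr \<iota> qq (Bgen n r \<iota> E F K c (tau n r)) (FXm n r \<iota> F)))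
        (Bgen n r \<iota> E F K c r)
      + \<iota> (qq * c r) * Bgen n r \<iota> E F K c (tau n (r - 1)) * Lw n K (tau n r) * (KX n r K - KXinv n r K)"
proof -
  interpret U: uqr n \<iota> E F K r
    unfolding uqr_def uqr_axioms_def uq_def using rels r by blast
  show ?thesis using U.rel1[of c] U.rel2[of c] by blast
qed

end
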